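(* Let $\mathbf{s}=\{1/n : n\in\mathbb{N}\}\cup\{0\}\subset\mathbb{R}$ with the topology induced from $\mathbb{R}$, and let $L(\mathbf{s})$ be the free locally convex space over $\mathbf{s}$. Then $L(\mathbf{s})$ is not a Mackey space. Consequently, $L(\mathbf{s})$ (regarded as an abelian topological group) is not a Mackey group.
   Context: All vector spaces are real. For a Tychonoff space $X$, the free locally convex space $L(X)$ is a locally convex space together with a continuous map $i:X\to L(X)$ such that every continuous map $f$ from $X$ into a locally convex space $E$ extends uniquely to a continuous linear operator $\bar f:L(X)\to E$ with $f=\bar f\circ i$; algebraically $L(X)$ is the free vector space on $X$. A locally convex vector topology $\nu$ on a vector space $E$ is compatible with a locally convex topology $\tau$ if $(E,\tau)$ and $(E,\nu)$ have the same continuous linear functionals. A locally convex space $(E,\tau)$ is a Mackey space if $\tau$ is the finest locally convex vector topology on $E$ compatible with $\tau$. Let $\mathbb{S}$ be the unit circle group and $\mathbb{S}_+=\{z\in\mathbb{S}:\mathrm{Re}(z)\ge 0\}$. For an abelian topological group $G$, $\widehat{G}$ denotes the group of continuous homomorphisms $G\to\mathbb{S}$ (characters). A subset $A\subseteq G$ is quasi-convex if for every $g\in G\setminus A$ there is $\chi\in\widehat G$ with $\chi(A)\subseteq\mathbb{S}_+$ and $\chi(g)\notin\mathbb{S}_+$. $G$ is locally quasi-convex if it has a neighborhood base at $0$ of quasi-convex sets. Two group topologies on an abelian group are compatible if they yield the same group of continuous characters. A locally quasi-convex abelian group $(G,\mu)$ is a Mackey group if every locally quasi-convex group topology $\nu$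 on $G$ compatible with $\mu$ satisfies $\nu\le\mu$. *)

theory Defs
  imports "HOL-Analysis.Analysis"
begin

definition conv_seq :: "real set" where
  "conv_seq = insert 0 {1 / real n | n. n \<ge> 1}"

type_synonym fvec = "real \<Rightarrow> real"

definition FV :: "fvec set" where
  "FV = {f. finite {x. f x \<noteq> 0} \<and> {x. f x \<noteq> 0} \<subseteq> conv_seq}"

definition vadd :: "fvec \<Rightarrow> fvec \<Rightarrow> fvec" where
  "vadd f g = (\<lambda>x. f x + g x)"

definition smul :: "real \<Rightarrow> fvec \<Rightarrow> fvec" where
  "smul c f = (\<lambda>x. c * f x)"

definition vneg :: "fvec \<Rightarrow> fvec" where
  "vneg f = (\<lambda>x. - f x)"

definition vzero :: fvec where
  "vzero = (\<lambda>x. 0)"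

definition delta :: "real \<Rightarrow> fvec" where
  "delta x = (\<lambda>y. if y = x then 1 else 0)"

definition vconvex :: "fvec set \<Rightarrow> bool" where
  "vconvex W \<longleftrightarrow> (\<forall>f\<in>W. \<forall>g\<in>W. \<forall>t::real. 0 \<le> t \<and> t \<le> 1 \<longrightarrow>
      vadd (smul t f) (smul (1 - t) g) \<in> W)"

definition vector_topology :: "fvec topology \<Rightarrow> bool" where
  "vector_topology T \<longleftrightarrow> topspace T = FV \<and>
     continuous_map (prod_topology T T) T (\<lambda>(f, g). vadd f g) \<and>
     continuous_map (prod_topology euclideanreal T) T (\<lambda>(c, f). smul c f)"

definition lc_vector_topology :: "fvec topology \<Rightarrow> bool" where
  "lc_vector_topology T \<longleftrightarrow> vector_topology T \<and>
     (\<forall>U x. openin T U \<and> x \<in> U \<longrightarrow>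
        (\<exists>W. openin T W \<and> vconvex W \<and> x \<in> W \<and> W \<subseteq> U))"

definition coarser :: "fvec topology \<Rightarrow> fvec topology \<Rightarrow> bool" where
  "coarser T T' \<longleftrightarrow> (\<forall>U. openin T U \<longrightarrow> openin T' U)"

definition free_lc_topology :: "fvec topology \<Rightarrow> bool" where
  "free_lc_topology T \<longleftrightarrow> lc_vector_topology T \<and>
     continuous_map (top_of_set conv_seq) T delta \<and>
     (\<forall>T'. lc_vector_topology T' \<and> continuous_map (top_of_set conv_seq) T' delta
           \<longrightarrow> coarser T' T)"

definition linear_on_FV :: "(fvec \<Rightarrow> real) \<Rightarrow> bool" where
  "linear_on_FV \<phi> \<longleftrightarrow> (\<forall>f\<in>FV. \<forall>g\<in>FV. \<forall>a b.
      \<phi> (vadd (smul a f) (smul b g)) = a * \<phi> f + b * \<phi> g)"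

text \<open>Continuous linear functionals (made extensional: 0 off FV).\<close>
definition lc_dual :: "fvec topology \<Rightarrow> (fvec \<Rightarrow> real) set" where
  "lc_dual T = {\<phi>. linear_on_FV \<phi> \<and> continuous_map T euclideanreal \<phi> \<and>
                   (\<forall>x. x \<notin> FV \<longrightarrow> \<phi> x = 0)}"

definition mackey_space :: "fvec topology \<Rightarrow> bool" where
  "mackey_space T \<longleftrightarrow> lc_vector_topology T \<and>
     (\<forall>\<nu>. lc_vector_topology \<nu> \<and> lc_dual \<nu> = lc_dual T \<longrightarrow> coarser \<nu> T)"

definition circle :: "complex set" where
  "circle = {z. cmod z = 1}"

definition circle_plus :: "complex set" where
  "circle_plus = {z. cmod z = 1 \<and> Re z \<ge> 0}"

definition group_topology :: "fvec topology \<Rightarrow> bool" where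
  "group_topology T \<longleftrightarrow> topspace T = FV \<and>
     continuous_map (prod_topology T T) T (\<lambda>(f, g). vadd f g) \<and>
     continuous_map T T vneg"

text \<open>Continuous characters of (FV, +) into the circle (made extensional: 1 off FV).\<close>
definition characters :: "fvec topology \<Rightarrow> (fvec \<Rightarrow> complex) set" where
  "characters T = {ch. (\<forall>f\<in>FV. ch f \<in> circle) \<and>
      (\<forall>f\<in>FV. \<forall>g\<in>FV. ch (vadd f g) = ch f * ch g) \<and>
      continuous_map T euclidean ch \<and> (\<forall>x. x \<notin> FV \<longrightarrow> ch x = 1)}"

definition quasi_convex :: "fvec topology \<Rightarrow> fvec set \<Rightarrow> bool" where
  "quasi_convex T A \<longleftrightarrow> A \<subseteq> FV \<and>
     (\<forall>g\<in>FV - A. \<exists>ch\<in>characters T. ch ` A \<subseteq> circle_plus \<and> ch g \<notin> circle_plus)"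

definition locally_quasi_convex :: "fvec topology \<Rightarrow> bool" where
  "locally_quasi_convex T \<longleftrightarrow> group_topology T \<and>
     (\<forall>U. openin T U \<and> vzero \<in> U \<longrightarrow>
        (\<exists>W. quasi_convex T W \<and> W \<subseteq> U \<and> (\<exists>V. openin T V \<and> vzero \<in> V \<and> V \<subseteq> W)))"

definition mackey_group :: "fvec topology \<Rightarrow> bool" where
  "mackey_group T \<longleftrightarrow> locally_quasi_convex T \<and>
     (\<forall>\<nu>. locally_quasi_convex \<nu> \<and> characters \<nu> = characters T \<longrightarrow> coarser \<nu> T)"

end

theory Submission
  imports Defs
begin


lemma FV_iff: "f \<in> FV \<longleftrightarrow> finite {x. f x \<noteq> 0} \<and> (\<forall>x. f x \<noteq> 0 \<longrightarrow> x \<in> conv_seq)"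
  unfolding FV_def by auto

lemma FV_lin: assumes "f \<in> FV" "g \<in> FV" shows "(\<lambda>x. a * f x + b * g x) \<in> FV"
proof -
  have "{x. a * f x + b * g x \<noteq> 0} \<subseteq> {x. f x \<noteq> 0} \<union> {x. g x \<noteq> 0}" by auto
  then show ?thesis using assms unfolding FV_iff by (auto intro: finite_subset)
qed

lemma FV_add: "f \<in> FV \<Longrightarrow> g \<in> FV \<Longrightarrow> (\<lambda>x. f x + g x) \<in> FV"
  using FV_lin[of f g 1 1] by simp

lemma FV_diff: "f \<in> FV \<Longrightarrow> g \<in> FV \<Longrightarrow> (\<lambda>x. f x - g x) \<in> FV"
  using FV_lin[of f g 1 "-1"] by simp

lemma FV_smul: "f \<in> FV \<Longrightarrow> (\<lambda>x. c * f x) \<in> FV"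
  using FV_lin[of f f c 0] by simp

lemma FV_zero: "(\<lambda>x. 0) \<in> FV"
  unfolding FV_iff by simp

lemma FV_sum: "finite J \<Longrightarrow> (\<And>j. j \<in> J \<Longrightarrow> v j \<in> FV) \<Longrightarrow> (\<lambda>x. \<Sum>j\<in>J. c j * v j x) \<in> FV"
proof (induction J rule: finite_induct)
  case empty then show ?case using FV_zero by simp
next
  case (insert j J)
  then have "(\<lambda>x. 1 * (c j * v j x) + 1 * (\<Sum>j\<in>J. c j * v j x)) \<in> FV"
    using FV_lin[of "\<lambda>x. c j * v j x" "\<lambda>x. \<Sum>j\<in>J. c j * v j x" 1 1] FV_smul by auto
  then show ?case using insert by simp
qed

lemma delta_FV: "x \<in> conv_seq \<Longrightarrow> delta x \<in> FV"
  unfolding FV_iff delta_def by auto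

lemma vadd_eq: "vadd f g = (\<lambda>x. f x + g x)" by (simp add: vadd_def)
lemma smul_eq: "smul c f = (\<lambda>x. c * f x)" by (simp add: smul_def)
lemma vneg_eq: "vneg f = (\<lambda>x. - f x)" by (simp add: vneg_def)

lemma linear_on_FV_lin:
  assumes "linear_on_FV \<phi>" "f \<in> FV" "g \<in> FV"
  shows "\<phi> (\<lambda>x. a * f x + b * g x) = a * \<phi> f + b * \<phi> g"
  using assms unfolding linear_on_FV_def vadd_def smul_def by auto

lemma linear_on_FV_add:
  "linear_on_FV \<phi> \<Longrightarrow> f \<in> FV \<Longrightarrow> g \<in> FV \<Longrightarrow> \<phi> (\<lambda>x. f x + g x) = \<phi> f + \<phi> g"
  using linear_on_FV_lin[of \<phi> f g 1 1] by simp

lemma linear_on_FV_diff: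
  "linear_on_FV \<phi> \<Longrightarrow> f \<in> FV \<Longrightarrow> g \<in> FV \<Longrightarrow> \<phi> (\<lambda>x. f x - g x) = \<phi> f - \<phi> g"
  using linear_on_FV_lin[of \<phi> f g 1 "-1"] by simp

lemma linear_on_FV_smul:
  "linear_on_FV \<phi> \<Longrightarrow> f \<in> FV \<Longrightarrow> \<phi> (\<lambda>x. c * f x) = c * \<phi> f"
  using linear_on_FV_lin[of \<phi> f f c 0] by simp

lemma linear_on_FV_zero:
  "linear_on_FV \<phi> \<Longrightarrow> \<phi> (\<lambda>x. 0) = 0"
  using linear_on_FV_smul[of \<phi> "\<lambda>x. 0" 0] FV_zero by simp

lemma linear_on_FV_sum:
  assumes "linear_on_FV \<phi>" "finite J" "\<And>j. j \<in> J \<Longrightarrow> v j \<in> FV"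
  shows "\<phi> (\<lambda>x. \<Sum>j\<in>J. c j * v j x) = (\<Sum>j\<in>J. c j * \<phi> (v j))"
  using assms(2,3)
proof (induction J rule: finite_induct)
  case empty then show ?case using linear_on_FV_zero[OF assms(1)] by simp
next
  case (insert j J)
  have "\<phi> (\<lambda>x. \<Sum>j\<in>insert j J. c j * v j x) = \<phi> (\<lambda>x. c j * v j x + 1 * (\<Sum>j\<in>J. c j * v j x))"
    using insert by simp
  also have "\<dots> = c j * \<phi> (v j) + 1 * \<phi> (\<lambda>x. \<Sum>j\<in>J. c j * v j x)"
    by (rule linear_on_FV_lin[OF assms(1)]) (use insert FV_sum[of J v c] in auto)
  finally show ?case using insert by simp
qed

lemma linear_on_FVI:
  assumes "\<And>f g a b. f \<in> FV \<Longrightarrow> g \<in> FV \<Longrightarrow> \<phi> (\<lambda>x. a * f x + b * g x) = a * \<phi> f + b * \<phi> g"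
  shows "linear_on_FV \<phi>"
  using assms unfolding linear_on_FV_def vadd_def smul_def by auto

section \<open>Seminorm topologies\<close>

definition seminormFV :: "(fvec \<Rightarrow> real) \<Rightarrow> bool" where
  "seminormFV q \<longleftrightarrow> (\<forall>f\<in>FV. 0 \<le> q f) \<and> (\<forall>f\<in>FV. \<forall>g\<in>FV. q (\<lambda>x. f x + g x) \<le> q f + q g)
     \<and> (\<forall>f\<in>FV. \<forall>c. q (\<lambda>x. c * f x) = \<bar>c\<bar> * q f)"

definition goodQ :: "(fvec \<Rightarrow> real) set \<Rightarrow> bool" where
  "goodQ Q \<longleftrightarrow> Q \<noteq> {} \<and> (\<forall>q\<in>Q. seminormFV q) \<and> (\<forall>q\<in>Q. \<forall>r>0. (\<lambda>f. r * q f) \<in> Q)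
     \<and> (\<forall>q1\<in>Q. \<forall>q2\<in>Q. \<exists>q\<in>Q. \<forall>f\<in>FV. q1 f \<le> q f \<and> q2 f \<le> q f)"

definition semopen :: "(fvec \<Rightarrow> real) set \<Rightarrow> fvec set \<Rightarrow> bool" where
  "semopen Q U \<longleftrightarrow> U \<subseteq> FV \<and> (\<forall>f\<in>U. \<exists>q\<in>Q. \<forall>g\<in>FV. q (\<lambda>x. g x - f x) < 1 \<longrightarrow> g \<in> U)"

definition semtop :: "(fvec \<Rightarrow> real) set \<Rightarrow> fvec topology" where
  "semtop Q = topology (semopen Q)"

lemma sn_nonneg: "seminormFV q \<Longrightarrow> f \<in> FV \<Longrightarrow> 0 \<le> q f"
  unfolding seminormFV_def by auto
lemma sn_add: "seminormFV q \<Longrightarrow> f \<in> FV \<Longrightarrow> g \<in> FV \<Longrightarrow> q (\<lambda>x. f x + g x) \<le> q f + q g"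
  unfolding seminormFV_def by auto
lemma sn_smul: "seminormFV q \<Longrightarrow> f \<in> FV \<Longrightarrow> q (\<lambda>x. c * f x) = \<bar>c\<bar> * q f"
  unfolding seminormFV_def by auto
lemma sn_zero: "seminormFV q \<Longrightarrow> q (\<lambda>x. 0) = 0"
  using sn_smul[of q "\<lambda>x. 0" 0] FV_zero by simp
lemma sn_tri: assumes "seminormFV q" "f \<in> FV" "g \<in> FV" "h \<in> FV"
  shows "q (\<lambda>x. f x - h x) \<le> q (\<lambda>x. f x - g x) + q (\<lambda>x. g x - h x)"
proof -
  have "q (\<lambda>x. (f x - g x) + (g x - h x)) \<le> q (\<lambda>x. f x - g x) + q (\<lambda>x. g x - h x)"
    by (rule sn_add) (use assms FV_diff in auto)
  then show ?thesis by simp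
qed
lemma sn_sym: assumes "seminormFV q" "f \<in> FV" "g \<in> FV"
  shows "q (\<lambda>x. f x - g x) = q (\<lambda>x. g x - f x)"
proof -
  have "q (\<lambda>x. (-1) * (g x - f x)) = \<bar>-1\<bar> * q (\<lambda>x. g x - f x)"
    by (rule sn_smul) (use assms FV_diff in auto)
  then show ?thesis by simp
qed

lemma goodQ_sn: "goodQ Q \<Longrightarrow> q \<in> Q \<Longrightarrow> seminormFV q"
  unfolding goodQ_def by auto
lemma goodQ_scale: "goodQ Q \<Longrightarrow> q \<in> Q \<Longrightarrow> r > 0 \<Longrightarrow> (\<lambda>f. r * q f) \<in> Q"
  unfolding goodQ_def by auto
lemma goodQ_dir: "goodQ Q \<Longrightarrow> q1 \<in> Q \<Longrightarrow> q2 \<in> Q \<Longrightarrow> \<exists>q\<in>Q. \<forall>f\<in>FV. q1 f \<le> q f \<and> q2 f \<le> q f"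
  unfolding goodQ_def by auto
lemma goodQ_ne: "goodQ Q \<Longrightarrow> \<exists>q. q \<in> Q"
  unfolding goodQ_def by auto

lemma istopology_semopen: assumes "goodQ Q" shows "istopology (semopen Q)"
  unfolding istopology_def
proof (intro conjI allI impI)
  fix S T assume S: "semopen Q S" and T: "semopen Q T"
  show "semopen Q (S \<inter> T)"
    unfolding semopen_def
  proof (intro conjI ballI)
    show "S \<inter> T \<subseteq> FV" using S unfolding semopen_def by auto
    fix f assume f: "f \<in> S \<inter> T"
    obtain q1 where q1: "q1 \<in> Q" "\<forall>g\<in>FV. q1 (\<lambda>x. g x - f x) < 1 \<longrightarrow> g \<in> S"
      using S f unfolding semopen_def by auto
    obtain q2 where q2: "q2 \<in> Q" "\<forall>g\<in>FV. q2 (\<lambda>x. g x - f x) < 1 \<longrightarrow> g \<in> T"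
      using T f unfolding semopen_def by auto
    obtain q where q: "q \<in> Q" "\<forall>h\<in>FV. q1 h \<le> q h \<and> q2 h \<le> q h"
      using goodQ_dir[OF assms q1(1) q2(1)] by auto
    have fF: "f \<in> FV" using f S unfolding semopen_def by auto
    show "\<exists>q\<in>Q. \<forall>g\<in>FV. q (\<lambda>x. g x - f x) < 1 \<longrightarrow> g \<in> S \<inter> T"
    proof (intro bexI[OF _ q(1)] ballI impI)
      fix g assume g: "g \<in> FV" "q (\<lambda>x. g x - f x) < 1"
      have "(\<lambda>x. g x - f x) \<in> FV" using g fF FV_diff by auto
      then show "g \<in> S \<inter> T" using q q1 q2 g by fastforce
    qed
  qed
next
  fix K assume K: "\<forall>S\<in>K. semopen Q S"
  show "semopen Q (\<Union>K)"
    unfolding semopen_def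
  proof (intro conjI ballI)
    show "\<Union>K \<subseteq> FV" using K unfolding semopen_def by auto
    fix f assume "f \<in> \<Union>K"
    then obtain S where S: "S \<in> K" "f \<in> S" by auto
    then obtain q where "q \<in> Q" "\<forall>g\<in>FV. q (\<lambda>x. g x - f x) < 1 \<longrightarrow> g \<in> S"
      using K unfolding semopen_def by blast
    then show "\<exists>q\<in>Q. \<forall>g\<in>FV. q (\<lambda>x. g x - f x) < 1 \<longrightarrow> g \<in> \<Union>K" using S by blast
  qed
qed

lemma openin_semtop: "goodQ Q \<Longrightarrow> openin (semtop Q) U \<longleftrightarrow> semopen Q U"
  unfolding semtop_def using topology_inverse'[OF istopology_semopen] by simp

lemma topspace_semtop: assumes "goodQ Q" shows "topspace (semtop Q) = FV"
proof -
  obtain q where "q \<in> Q" using goodQ_ne[OF assms] by auto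
  then have "semopen Q FV" unfolding semopen_def by auto
  then have "FV \<subseteq> topspace (semtop Q)"
    using openin_semtop[OF assms] openin_subset by blast
  moreover have "topspace (semtop Q) \<subseteq> FV"
    unfolding topspace_def using openin_semtop[OF assms] semopen_def by auto
  ultimately show ?thesis by auto
qed

definition sball :: "(fvec \<Rightarrow> real) \<Rightarrow> fvec \<Rightarrow> real \<Rightarrow> fvec set" where
  "sball q f r = {g\<in>FV. q (\<lambda>x. g x - f x) < r}"

lemma sball_open:
  assumes Q: "goodQ Q" and q: "q \<in> Q" and f: "f \<in> FV"
  shows "openin (semtop Q) (sball q f r)"
  unfolding openin_semtop[OF Q] semopen_def
proof (intro conjI ballI)
  show "sball q f r \<subseteq> FV" unfolding sball_def by auto
  fix h assume h: "h \<in> sball q f r"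
  define s where "s = r - q (\<lambda>x. h x - f x)"
  have s: "s > 0" "h \<in> FV" using h unfolding sball_def s_def by auto
  have sn: "seminormFV q" using goodQ_sn[OF Q q] .
  show "\<exists>q'\<in>Q. \<forall>g\<in>FV. q' (\<lambda>x. g x - h x) < 1 \<longrightarrow> g \<in> sball q f r"
  proof (intro bexI[OF _ goodQ_scale[OF Q q, of "1/s"]] ballI impI)
    fix g assume g: "g \<in> FV" "(1/s) * q (\<lambda>x. g x - h x) < 1"
    then have "q (\<lambda>x. g x - h x) < s" using s by (simp add: field_simps)
    moreover have "q (\<lambda>x. g x - f x) \<le> q (\<lambda>x. g x - h x) + q (\<lambda>x. h x - f x)"
      using sn_tri[OF sn g(1) s(2) f] .
    ultimately show "g \<in> sball q f r" using g unfolding sball_def s_def by auto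
  qed (use s in auto)
qed

lemma sball_center: "seminormFV q \<Longrightarrow> f \<in> FV \<Longrightarrow> r > 0 \<Longrightarrow> f \<in> sball q f r"
  unfolding sball_def using sn_zero[of q] by auto

lemma semopenD: assumes "goodQ Q" "openin (semtop Q) U" "f \<in> U"
  shows "\<exists>q\<in>Q. \<forall>g\<in>FV. q (\<lambda>x. g x - f x) < 1 \<longrightarrow> g \<in> U"
  using assms openin_semtop semopen_def by blast

lemma semtop_vadd: assumes Q: "goodQ Q"
  shows "continuous_map (prod_topology (semtop Q) (semtop Q)) (semtop Q) (\<lambda>(f, g). vadd f g)"
  unfolding continuous_map_def
proof (intro conjI allI impI)
  show "(\<lambda>(f, g). vadd f g) \<in> topspace (prod_topology (semtop Q) (semtop Q)) \<rightarrow> topspace (semtop Q)"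
    using topspace_semtop[OF Q] FV_add by (auto simp: vadd_eq)
  fix U assume U: "openin (semtop Q) U"
  show "openin (prod_topology (semtop Q) (semtop Q))
          {x \<in> topspace (prod_topology (semtop Q) (semtop Q)). (case x of (f, g) \<Rightarrow> vadd f g) \<in> U}"
    unfolding openin_prod_topology_alt
  proof (intro allI impI)
    fix f g assume fg: "(f, g) \<in> {x \<in> topspace (prod_topology (semtop Q) (semtop Q)). (case x of (f, g) \<Rightarrow> vadd f g) \<in> U}"
    then have fF: "f \<in> FV" and gF: "g \<in> FV" and fgU: "(\<lambda>x. f x + g x) \<in> U"
      using topspace_semtop[OF Q] by (auto simp: vadd_eq)
    obtain q where q: "q \<in> Q" "\<forall>h\<in>FV. q (\<lambda>x. h x - (f x + g x)) < 1 \<longrightarrow> h \<in> U"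
      using semopenD[OF Q U fgU] by auto
    have sn: "seminormFV q" using goodQ_sn[OF Q q(1)] .
    show "\<exists>U1 V1. openin (semtop Q) U1 \<and> openin (semtop Q) V1 \<and> f \<in> U1 \<and> g \<in> V1 \<and>
       U1 \<times> V1 \<subseteq> {x \<in> topspace (prod_topology (semtop Q) (semtop Q)). (case x of (f, g) \<Rightarrow> vadd f g) \<in> U}"
    proof (intro exI conjI)
      show "openin (semtop Q) (sball q f (1/2))" "openin (semtop Q) (sball q g (1/2))"
        using sball_open[OF Q q(1)] fF gF by auto
      show "f \<in> sball q f (1/2)" "g \<in> sball q g (1/2)" using sball_center[OF sn] fF gF by auto
      have key: "\<forall>a\<in>sball q f (1/2). \<forall>b\<in>sball q g (1/2). a \<in> FV \<and> b \<in> FV \<and> vadd a b \<in> U"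
      proof (intro ballI)
        fix a b assume a: "a \<in> sball q f (1/2)" and b: "b \<in> sball q g (1/2)"
        have aF: "a \<in> FV" and bF: "b \<in> FV" using a b unfolding sball_def by auto
        have "q (\<lambda>x. (a x - f x) + (b x - g x)) \<le> q (\<lambda>x. a x - f x) + q (\<lambda>x. b x - g x)"
          by (rule sn_add[OF sn]) (use aF bF fF gF FV_diff in auto)
        also have "\<dots> < 1" using a b unfolding sball_def by auto
        finally have "q (\<lambda>x. (a x + b x) - (f x + g x)) < 1" by (simp add: algebra_simps)
        then have "(\<lambda>x. a x + b x) \<in> U" using q(2) FV_add[OF aF bF] by auto
        then show "a \<in> FV \<and> b \<in> FV \<and> vadd a b \<in> U"
          using aF bF by (auto simp: vadd_eq)
      qed
      then show "sball q f (1/2) \<times> sball q g (1/2) \<subseteq> {x \<in> topspace (prod_topology (semtop Q) (semtop Q)). (case x of (f, g) \<Rightarrow> vadd f g) \<in> U}"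
        using topspace_semtop[OF Q] by auto
    qed
  qed
qed

lemma semtop_smul: assumes Q: "goodQ Q"
  shows "continuous_map (prod_topology euclideanreal (semtop Q)) (semtop Q) (\<lambda>(c, f). smul c f)"
  unfolding continuous_map_def
proof (intro conjI allI impI)
  show "(\<lambda>(c, f). smul c f) \<in> topspace (prod_topology euclideanreal (semtop Q)) \<rightarrow> topspace (semtop Q)"
    using topspace_semtop[OF Q] FV_smul by (auto simp: smul_eq)
  fix U assume U: "openin (semtop Q) U"
  show "openin (prod_topology euclideanreal (semtop Q))
          {x \<in> topspace (prod_topology euclideanreal (semtop Q)). (case x of (c, f) \<Rightarrow> smul c f) \<in> U}"
    unfolding openin_prod_topology_alt
  proof (intro allI impI)
    fix c0 f0 assume fg: "(c0, f0) \<in> {x \<in> topspace (prod_topology euclideanreal (semtop Q)). (case x of (c, f) \<Rightarrow> smul c f) \<in> U}"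
    then have fF: "f0 \<in> FV" and fgU: "(\<lambda>x. c0 * f0 x) \<in> U"
      using topspace_semtop[OF Q] by (auto simp: smul_eq)
    obtain q where q: "q \<in> Q" "\<forall>h\<in>FV. q (\<lambda>x. h x - c0 * f0 x) < 1 \<longrightarrow> h \<in> U"
      using semopenD[OF Q U fgU] by auto
    have sn: "seminormFV q" using goodQ_sn[OF Q q(1)] .
    define a where "a = q f0"
    have a0: "a \<ge> 0" using sn_nonneg[OF sn fF] a_def by simp
    define d where "d = 1 / (2 * (a + 1))"
    define r where "r = 1 / (2 * (\<bar>c0\<bar> + 1))"
    have d0: "d > 0" "d \<le> 1/2" using a0 unfolding d_def by (auto simp: field_simps)
    have r0: "r > 0" using r_def by auto
    show "\<exists>U1 V1. openin euclideanreal U1 \<and> openin (semtop Q) V1 \<and> c0 \<in> U1 \<and> f0 \<in> V1 \<and>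
       U1 \<times> V1 \<subseteq> {x \<in> topspace (prod_topology euclideanreal (semtop Q)). (case x of (c, f) \<Rightarrow> smul c f) \<in> U}"
    proof (intro exI conjI)
      show "openin euclideanreal (ball c0 d)" by simp
      show "openin (semtop Q) (sball q f0 r)" using sball_open[OF Q q(1) fF] .
      show "c0 \<in> ball c0 d" using d0 by simp
      show "f0 \<in> sball q f0 r" using sball_center[OF sn fF r0] .
      have key: "\<forall>c\<in>ball c0 d. \<forall>f\<in>sball q f0 r. f \<in> FV \<and> smul c f \<in> U"
      proof (intro ballI)
        fix c f assume c: "c \<in> ball c0 d" and f: "f \<in> sball q f0 r"
        have fF': "f \<in> FV" using f unfolding sball_def by auto
        have cd: "\<bar>c - c0\<bar> < d" using c by (simp add: dist_real_def abs_minus_commute)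
        have qf: "q (\<lambda>x. f x - f0 x) < r" using f unfolding sball_def by auto
        have "q (\<lambda>x. c * (f x - f0 x) + (c - c0) * f0 x) \<le> q (\<lambda>x. c * (f x - f0 x)) + q (\<lambda>x. (c - c0) * f0 x)"
          by (rule sn_add[OF sn]) (use fF fF' FV_diff FV_smul in auto)
        also have "\<dots> = \<bar>c\<bar> * q (\<lambda>x. f x - f0 x) + \<bar>c - c0\<bar> * a"
          using sn_smul[OF sn] FV_diff fF fF' a_def by auto
        also have "\<dots> < 1"
        proof -
          have "\<bar>c\<bar> \<le> \<bar>c0\<bar> + 1" using cd d0 by linarith
          then have "\<bar>c\<bar> * q (\<lambda>x. f x - f0 x) \<le> (\<bar>c0\<bar> + 1) * r"
            using qf sn_nonneg[OF sn] FV_diff[OF fF' fF] by (intro mult_mono) auto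
          also have "\<dots> = 1/2" unfolding r_def by auto
          finally have A: "\<bar>c\<bar> * q (\<lambda>x. f x - f0 x) \<le> 1/2" .
          have "\<bar>c - c0\<bar> * a \<le> d * a" using cd a0 by (intro mult_right_mono) auto
          also have "d * a < 1/2" unfolding d_def using a0 by (simp add: field_simps)
          finally show ?thesis using A by linarith
        qed
        finally have "q (\<lambda>x. c * f x - c0 * f0 x) < 1" by (simp add: algebra_simps)
        then have "(\<lambda>x. c * f x) \<in> U" using q(2) FV_smul[OF fF'] by auto
        then show "f \<in> FV \<and> smul c f \<in> U"
          using fF' by (auto simp: smul_eq)
      qed
      then show "ball c0 d \<times> sball q f0 r \<subseteq> {x \<in> topspace (prod_topology euclideanreal (semtop Q)). (case x of (c, f) \<Rightarrow> smul c f) \<in> U}"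
        using topspace_semtop[OF Q] by auto
    qed
  qed
qed

lemma semtop_lc: assumes Q: "goodQ Q" shows "lc_vector_topology (semtop Q)"
  unfolding lc_vector_topology_def vector_topology_def
proof (intro conjI allI impI)
  show "topspace (semtop Q) = FV" using topspace_semtop[OF Q] .
  show "continuous_map (prod_topology (semtop Q) (semtop Q)) (semtop Q) (\<lambda>(f, g). vadd f g)"
    using semtop_vadd[OF Q] .
  show "continuous_map (prod_topology euclideanreal (semtop Q)) (semtop Q) (\<lambda>(c, f). smul c f)"
    using semtop_smul[OF Q] .
  fix U x assume Ux: "openin (semtop Q) U \<and> x \<in> U"
  then obtain q where q: "q \<in> Q" "\<forall>g\<in>FV. q (\<lambda>y. g y - x y) < 1 \<longrightarrow> g \<in> U"
    using semopenD[OF Q] by blast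
  have sn: "seminormFV q" using goodQ_sn[OF Q q(1)] .
  have xF: "x \<in> FV" using Ux openin_subset topspace_semtop[OF Q] by blast
  show "\<exists>W. openin (semtop Q) W \<and> vconvex W \<and> x \<in> W \<and> W \<subseteq> U"
  proof (intro exI conjI)
    show "openin (semtop Q) (sball q x 1)" using sball_open[OF Q q(1) xF] .
    show "x \<in> sball q x 1" using sball_center[OF sn xF] by simp
    show "sball q x 1 \<subseteq> U" using q unfolding sball_def by auto
    show "vconvex (sball q x 1)"
      unfolding vconvex_def
    proof (intro ballI allI impI)
      fix f g and t :: real assume f: "f \<in> sball q x 1" and g: "g \<in> sball q x 1" and t: "0 \<le> t \<and> t \<le> 1"
      have fF: "f \<in> FV" and gF: "g \<in> FV" using f g unfolding sball_def by auto
      have "q (\<lambda>y. t * (f y - x y) + (1 - t) * (g y - x y)) \<le> q (\<lambda>y. t * (f y - x y)) + q (\<lambda>y. (1 - t) * (g y - x y))"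
        by (rule sn_add[OF sn]) (use fF gF xF FV_diff FV_smul in auto)
      also have "\<dots> = t * q (\<lambda>y. f y - x y) + (1 - t) * q (\<lambda>y. g y - x y)"
        using sn_smul[OF sn] FV_diff fF gF xF t by auto
      also have "\<dots> < 1"
      proof -
        have a: "q (\<lambda>y. f y - x y) < 1" "q (\<lambda>y. g y - x y) < 1" using f g unfolding sball_def by auto
        show ?thesis
        proof (cases "t = 0")
          case True then show ?thesis using a by simp
        next
          case False
          then have "t * q (\<lambda>y. f y - x y) < t" using a t by simp
          moreover have "(1 - t) * q (\<lambda>y. g y - x y) \<le> 1 - t" using a t by (intro mult_left_le) auto
          ultimately show ?thesis by linarith
        qed
      qed
      finally have "q (\<lambda>y. (t * f y + (1 - t) * g y) - x y) < 1" by (simp add: algebra_simps)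
      moreover have "(\<lambda>y. t * f y + (1 - t) * g y) \<in> FV" using FV_lin fF gF by auto
      ultimately show "vadd (smul t f) (smul (1 - t) g) \<in> sball q x 1"
        unfolding sball_def by (simp add: vadd_eq smul_eq)
    qed
  qed
qed

lemma semtop_coarser:
  assumes Q: "goodQ Q" and Q': "goodQ Q'" and dom: "\<forall>q\<in>Q. \<exists>q'\<in>Q'. \<forall>f\<in>FV. q f \<le> q' f"
  shows "coarser (semtop Q) (semtop Q')"
  unfolding coarser_def
proof (intro allI impI)
  fix U assume U: "openin (semtop Q) U"
  show "openin (semtop Q') U" unfolding openin_semtop[OF Q'] semopen_def
  proof (intro conjI ballI)
    show "U \<subseteq> FV" using U openin_subset topspace_semtop[OF Q] by blast
    fix f assume f: "f \<in> U"
    obtain q where q: "q \<in> Q" "\<forall>g\<in>FV. q (\<lambda>x. g x - f x) < 1 \<longrightarrow> g \<in> U"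
      using semopenD[OF Q U f] by auto
    obtain q' where q': "q' \<in> Q'" "\<forall>h\<in>FV. q h \<le> q' h" using dom q(1) by auto
    have fF: "f \<in> FV" using f U openin_subset topspace_semtop[OF Q] by blast
    show "\<exists>q'\<in>Q'. \<forall>g\<in>FV. q' (\<lambda>x. g x - f x) < 1 \<longrightarrow> g \<in> U"
    proof (intro bexI[OF _ q'(1)] ballI impI)
      fix g assume g: "g \<in> FV" "q' (\<lambda>x. g x - f x) < 1"
      have "(\<lambda>x. g x - f x) \<in> FV" using FV_diff g fF by auto
      then have "q (\<lambda>x. g x - f x) \<le> q' (\<lambda>x. g x - f x)" using q'(2) by blast
      then show "g \<in> U" using q g by auto
    qed
  qed
qed

lemma coarser_cont:
  assumes "coarser T T'" "topspace T = topspace T'" "continuous_map T X h"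
  shows "continuous_map T' X h"
  using assms unfolding coarser_def continuous_map_def by auto

lemma dominated_cont:
  assumes Q: "goodQ Q" and phi: "linear_on_FV \<phi>" and q: "q \<in> Q" and dom: "\<forall>f\<in>FV. \<bar>\<phi> f\<bar> \<le> q f"
  shows "continuous_map (semtop Q) euclideanreal \<phi>"
  unfolding continuous_map_def
proof (intro conjI allI impI)
  show "\<phi> \<in> topspace (semtop Q) \<rightarrow> topspace euclideanreal" by simp
  fix V :: "real set" assume V: "openin euclideanreal V"
  show "openin (semtop Q) {x \<in> topspace (semtop Q). \<phi> x \<in> V}"
    unfolding openin_semtop[OF Q] semopen_def topspace_semtop[OF Q]
  proof (intro conjI ballI)
    fix f assume f: "f \<in> {x \<in> FV. \<phi> x \<in> V}"
    have "open V" using V by simp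
    moreover have "\<phi> f \<in> V" using f by auto
    ultimately obtain e where e: "e > 0" "ball (\<phi> f) e \<subseteq> V"
      using open_contains_ball by blast
    show "\<exists>q\<in>Q. \<forall>g\<in>FV. q (\<lambda>x. g x - f x) < 1 \<longrightarrow> g \<in> {x \<in> FV. \<phi> x \<in> V}"
    proof (intro bexI[OF _ goodQ_scale[OF Q q, of "2/e"]] ballI impI)
      fix g assume g: "g \<in> FV" "2 / e * q (\<lambda>x. g x - f x) < 1"
      have fF: "f \<in> FV" using f by auto
      have "\<bar>\<phi> g - \<phi> f\<bar> = \<bar>\<phi> (\<lambda>x. g x - f x)\<bar>" using linear_on_FV_diff[OF phi g(1) fF] by simp
      also have "\<dots> \<le> q (\<lambda>x. g x - f x)" using dom FV_diff[OF g(1) fF] by auto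
      also have "\<dots> < e/2" using g(2) e by (simp add: field_simps)
      finally have "\<phi> g \<in> ball (\<phi> f) e" using e by (simp add: dist_real_def abs_minus_commute)
      then show "g \<in> {x \<in> FV. \<phi> x \<in> V}" using e g by auto
    qed (use e in auto)
  qed auto
qed

lemma scale_bound:
  assumes phi: "linear_on_FV \<phi>" and sn: "seminormFV q" and B: "B > 0"
    and h: "\<forall>g\<in>FV. q g < 1 \<longrightarrow> \<bar>\<phi> g\<bar> < B"
  shows "\<forall>f\<in>FV. \<bar>\<phi> f\<bar> \<le> B * q f"
proof (intro ballI, rule ccontr)
  fix f assume f: "f \<in> FV" and n: "\<not> \<bar>\<phi> f\<bar> \<le> B * q f"
  define r where "r = \<bar>\<phi> f\<bar> / B"
  have q0: "q f \<ge> 0" using sn_nonneg[OF sn f] .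
  have rq: "r > q f" using n B unfolding r_def by (simp add: field_simps)
  then have r0: "r > 0" using q0 by linarith
  have "q (\<lambda>x. (1/r) * f x) = \<bar>1/r\<bar> * q f" by (rule sn_smul[OF sn f])
  also have "\<dots> = q f / r" using r0 by simp
  also have "\<dots> < 1" using rq r0 by simp
  finally have lt: "q (\<lambda>x. (1/r) * f x) < 1" .
  have "(\<lambda>x. (1/r) * f x) \<in> FV" by (rule FV_smul[OF f])
  then have "\<bar>\<phi> (\<lambda>x. (1/r) * f x)\<bar> < B" using h lt by blast
  moreover have "\<phi> (\<lambda>x. (1/r) * f x) = (1/r) * \<phi> f" by (rule linear_on_FV_smul[OF phi f])
  ultimately have "\<bar>(1/r) * \<phi> f\<bar> < B" by simp
  then have "\<bar>\<phi> f\<bar> / r < B" using r0 by (simp add: abs_mult)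
  then have "\<bar>\<phi> f\<bar> < B * r" using r0 by (simp add: field_simps)
  then show False unfolding r_def using B by simp
qed

lemma cont_dominated:
  assumes Q: "goodQ Q" and phi: "linear_on_FV \<phi>" and c: "continuous_map (semtop Q) euclideanreal \<phi>"
  shows "\<exists>q\<in>Q. \<forall>f\<in>FV. \<bar>\<phi> f\<bar> \<le> q f"
proof -
  have "{y::real. \<bar>y\<bar> < 1} = ball 0 1" by (auto simp: dist_real_def)
  then have "openin euclideanreal {y::real. \<bar>y\<bar> < 1}" by simp
  then have "openin (semtop Q) {x \<in> topspace (semtop Q). \<phi> x \<in> {y. \<bar>y\<bar> < 1}}"
    using c unfolding continuous_map_def by blast
  moreover have "(\<lambda>x. 0) \<in> {x \<in> topspace (semtop Q). \<phi> x \<in> {y. \<bar>y\<bar> < 1}}"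
    using linear_on_FV_zero[OF phi] FV_zero topspace_semtop[OF Q] by auto
  ultimately obtain q where q: "q \<in> Q" "\<forall>g\<in>FV. q (\<lambda>x. g x - 0) < 1 \<longrightarrow> g \<in> {x \<in> topspace (semtop Q). \<phi> x \<in> {y. \<bar>y\<bar> < 1}}"
    using semopenD[OF Q] by blast
  have "\<forall>f\<in>FV. \<bar>\<phi> f\<bar> \<le> 1 * q f"
    by (rule scale_bound[OF phi goodQ_sn[OF Q q(1)]]) (use q in auto)
  then show ?thesis using q(1) by auto
qed


lemma lc_group: assumes "lc_vector_topology T" shows "group_topology T"
proof -
  have vt: "vector_topology T" using assms lc_vector_topology_def by auto
  have "continuous_map T (prod_topology euclideanreal T) (\<lambda>f. (-1, f))"
    by (intro continuous_map_pairedI) (auto simp: continuous_map_id[unfolded id_def])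
  then have "continuous_map T T ((\<lambda>(c, f). smul c f) \<circ> (\<lambda>f. (-1, f)))"
    using continuous_map_compose vt unfolding vector_topology_def by blast
  moreover have "((\<lambda>(c, f). smul c f) \<circ> (\<lambda>f. (-1::real, f))) = vneg"
    by (auto simp: smul_eq vneg_eq fun_eq_iff)
  ultimately show ?thesis using vt unfolding group_topology_def vector_topology_def by auto
qed

definition chr :: "real \<Rightarrow> (fvec \<Rightarrow> real) \<Rightarrow> fvec \<Rightarrow> complex" where
  "chr c \<phi> f = (if f \<in> FV then cis (2 * pi * c * \<phi> f) else 1)"

lemma cont_cis_comp:
  assumes "continuous_map T euclideanreal \<phi>"
  shows "continuous_map T euclidean (\<lambda>f. cis (a * \<phi> f))"
proof -
  have "continuous_on UNIV (\<lambda>t. cis (a * t))" unfolding cis_conv_exp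
    by (intro continuous_intros)
  then have "continuous_map euclideanreal euclidean (\<lambda>t. cis (a * t))"
    using continuous_map_iff_continuous2 by blast
  then have "continuous_map T euclidean ((\<lambda>t. cis (a * t)) \<circ> \<phi>)"
    using continuous_map_compose assms by blast
  then show ?thesis by (simp add: o_def)
qed

lemma chr_char:
  assumes top: "topspace T = FV" and phi: "linear_on_FV \<phi>" and c: "continuous_map T euclideanreal \<phi>"
  shows "chr c \<phi> \<in> characters T"
  unfolding characters_def
proof (intro CollectI conjI ballI allI impI)
  fix f assume "f \<in> FV" then show "chr c \<phi> f \<in> circle" by (simp add: chr_def circle_def)
next
  fix f g assume f: "f \<in> FV" and g: "g \<in> FV"
  have "\<phi> (vadd f g) = \<phi> f + \<phi> g" using linear_on_FV_add[OF phi f g] by (simp add: vadd_eq)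
  moreover have "vadd f g \<in> FV" using FV_add[OF f g] by (simp add: vadd_eq)
  ultimately show "chr c \<phi> (vadd f g) = chr c \<phi> f * chr c \<phi> g"
    using f g by (simp add: chr_def cis_mult algebra_simps)
next
  have "continuous_map T euclidean (\<lambda>f. cis ((2 * pi * c) * \<phi> f))" by (rule cont_cis_comp[OF c])
  then show "continuous_map T euclidean (chr c \<phi>)"
    by (rule continuous_map_eq) (use top in \<open>auto simp: chr_def mult.assoc\<close>)
next
  fix x assume "x \<notin> FV" then show "chr c \<phi> x = 1" by (simp add: chr_def)
qed

definition norming :: "(fvec \<Rightarrow> real) set \<Rightarrow> bool" where
  "norming Q \<longleftrightarrow> (\<forall>q\<in>Q. \<forall>g\<in>FV. \<exists>\<phi>. linear_on_FV \<phi> \<and> (\<forall>f\<in>FV. \<bar>\<phi> f\<bar> \<le> q f) \<and> q g \<le> 3 * \<bar>\<phi> g\<bar>)"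

lemma cos_nonneg_small: "\<bar>t\<bar> \<le> pi / 2 \<Longrightarrow> 0 \<le> cos t"
  by (intro cos_ge_zero) auto

lemma cos_neg_mid: assumes "pi / 2 < \<bar>t\<bar>" "\<bar>t\<bar> < 3 * pi / 2" shows "cos t < 0"
proof -
  have "cos \<bar>t\<bar> < 0" using cos_lt_zero_pi assms by blast
  then show ?thesis by (simp add: cos_abs_real)
qed

lemma semtop_lqc:
  assumes Q: "goodQ Q" and N: "norming Q"
  shows "locally_quasi_convex (semtop Q)"
  unfolding locally_quasi_convex_def
proof (intro conjI allI impI)
  show "group_topology (semtop Q)" using lc_group[OF semtop_lc[OF Q]] .
  fix U assume U: "openin (semtop Q) U \<and> vzero \<in> U"
  then obtain q where q: "q \<in> Q" "\<forall>g\<in>FV. q (\<lambda>x. g x - vzero x) < 1 \<longrightarrow> g \<in> U"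
    using semopenD[OF Q] by blast
  have sn: "seminormFV q" using goodQ_sn[OF Q q(1)] .
  define D where "D = {\<phi>. linear_on_FV \<phi> \<and> (\<forall>h\<in>FV. \<bar>\<phi> h\<bar> \<le> q h)}"
  define W where "W = {f\<in>FV. \<forall>\<phi>\<in>D. \<bar>\<phi> f\<bar> \<le> 1/4}"
  have z: "vzero \<in> FV" using FV_zero by (simp add: vzero_def)
  show "\<exists>W. quasi_convex (semtop Q) W \<and> W \<subseteq> U \<and> (\<exists>V. openin (semtop Q) V \<and> vzero \<in> V \<and> V \<subseteq> W)"
  proof (intro exI conjI)
    show "W \<subseteq> U"
    proof
      fix g assume g: "g \<in> W"
      then have gF: "g \<in> FV" unfolding W_def by auto
      obtain \<phi> where \<phi>: "linear_on_FV \<phi>" "\<forall>f\<in>FV. \<bar>\<phi> f\<bar> \<le> q f" "q g \<le> 3 * \<bar>\<phi> g\<bar>"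
        using N q(1) gF unfolding norming_def by blast
      then have "\<phi> \<in> D" unfolding D_def by auto
      then have "\<bar>\<phi> g\<bar> \<le> 1/4" using g unfolding W_def by auto
      then have "q g < 1" using \<phi>(3) by linarith
      then show "g \<in> U" using q(2) gF by (simp add: vzero_def)
    qed
    show "openin (semtop Q) (sball q vzero (1/4))" using sball_open[OF Q q(1) z] .
    show "vzero \<in> sball q vzero (1/4)" using sball_center[OF sn z] by simp
    show "sball q vzero (1/4) \<subseteq> W"
    proof
      fix f assume f: "f \<in> sball q vzero (1/4)"
      then have fF: "f \<in> FV" and qf: "q f < 1/4" unfolding sball_def by (auto simp: vzero_def)
      show "f \<in> W" unfolding W_def D_def using fF qf by force
    qed
    show "quasi_convex (semtop Q) W"
      unfolding quasi_convex_def
    proof (intro conjI ballI)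
      show "W \<subseteq> FV" unfolding W_def by auto
      fix g assume g: "g \<in> FV - W"
      then obtain \<phi> where \<phi>: "\<phi> \<in> D" "\<bar>\<phi> g\<bar> > 1/4" unfolding W_def by force
      have phil: "linear_on_FV \<phi>" and phid: "\<forall>h\<in>FV. \<bar>\<phi> h\<bar> \<le> q h" using \<phi>(1) unfolding D_def by auto
      have phic: "continuous_map (semtop Q) euclideanreal \<phi>" using dominated_cont[OF Q phil q(1) phid] .
      define c where "c = (if \<bar>\<phi> g\<bar> < 3/4 then 1 else 1 / (2 * \<bar>\<phi> g\<bar>))"
      have c0: "0 < c" "c \<le> 1" using \<phi>(2) unfolding c_def by (auto simp: field_simps)
      have cg: "1/4 < c * \<bar>\<phi> g\<bar> \<and> c * \<bar>\<phi> g\<bar> < 3/4" using \<phi>(2) unfolding c_def by (auto simp: field_simps)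
      show "\<exists>ch\<in>characters (semtop Q). ch ` W \<subseteq> circle_plus \<and> ch g \<notin> circle_plus"
      proof (intro bexI[OF _ chr_char[OF topspace_semtop[OF Q] phil phic]] conjI)
        show "chr c \<phi> ` W \<subseteq> circle_plus"
        proof
          fix z assume "z \<in> chr c \<phi> ` W"
          then obtain f where f: "f \<in> W" "z = chr c \<phi> f" by auto
          have fF: "f \<in> FV" using f unfolding W_def by auto
          have "\<bar>\<phi> f\<bar> \<le> 1/4" using f \<phi>(1) unfolding W_def by auto
          then have "c * \<bar>\<phi> f\<bar> \<le> 1/4" using c0 by (smt (verit) mult_left_le_one_le abs_ge_zero)
          then have "\<bar>2 * pi * c * \<phi> f\<bar> \<le> pi / 2" using c0 pi_gt_zero
            by (simp add: abs_mult)
          then have "0 \<le> cos (2 * pi * c * \<phi> f)" by (rule cos_nonneg_small)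
          then show "z \<in> circle_plus" using f fF by (simp add: chr_def circle_plus_def)
        qed
        have "\<bar>2 * pi * c * \<phi> g\<bar> = 2 * pi * (c * \<bar>\<phi> g\<bar>)" using c0 by (simp add: abs_mult)
        then have "pi / 2 < \<bar>2 * pi * c * \<phi> g\<bar> \<and> \<bar>2 * pi * c * \<phi> g\<bar> < 3 * pi / 2"
        proof -
          have "pi * (1/4) < pi * (c * \<bar>\<phi> g\<bar>)" "pi * (c * \<bar>\<phi> g\<bar>) < pi * (3/4)"
            using cg pi_gt_zero mult_strict_left_mono by blast+
          then show ?thesis using \<open>\<bar>2 * pi * c * \<phi> g\<bar> = 2 * pi * (c * \<bar>\<phi> g\<bar>)\<close> by linarith
        qed
        then have "cos (2 * pi * c * \<phi> g) < 0" using cos_neg_mid by blast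
        then show "chr c \<phi> g \<notin> circle_plus" using g by (simp add: chr_def circle_plus_def)
      qed
    qed
  qed
qed

lemma finer_dual:
  assumes "coarser T T'" "topspace T = topspace T'"
  shows "lc_dual T \<subseteq> lc_dual T'" "characters T \<subseteq> characters T'"
  using coarser_cont[OF assms] unfolding lc_dual_def characters_def by auto


definition adm :: "(nat \<Rightarrow> real) \<Rightarrow> bool" where
  "adm w \<longleftrightarrow> (\<forall>n. 0 < w n) \<and> w \<longlonglongrightarrow> 0"
definition Ssum :: "fvec \<Rightarrow> real" where
  "Ssum f = sum f {x. f x \<noteq> 0}"
definition NS :: "fvec \<Rightarrow> nat set" where
  "NS f = {n. 1 \<le> n \<and> f (1 / real n) \<noteq> 0}"
definition Cf :: "fvec \<Rightarrow> nat \<Rightarrow> real" where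
  "Cf f j = (if j = 0 then Ssum f else f (1 / real j))"
definition Pw :: "(nat \<Rightarrow> real) \<Rightarrow> fvec \<Rightarrow> real" where
  "Pw w f = (\<Sum>j\<in>insert 0 (NS f). w j * \<bar>Cf f j\<bar>)"
definition Mx :: "fvec \<Rightarrow> real" where
  "Mx f = Max (insert 0 ((\<lambda>n. \<bar>f (1 / real n)\<bar>) ` NS f))"
definition qq :: "(nat \<Rightarrow> real) \<Rightarrow> real \<Rightarrow> fvec \<Rightarrow> real" where
  "qq w l f = Pw w f + l * Mx f"
definition QQ :: "real set \<Rightarrow> (fvec \<Rightarrow> real) set" where
  "QQ L = {qq w l | w l. adm w \<and> l \<in> L}"

lemma inj_recip: "inj (\<lambda>n::nat. 1 / real n)"
  by (auto simp: inj_def)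

lemma finite_NS: assumes "f \<in> FV" shows "finite (NS f)"
proof -
  have "NS f \<subseteq> (\<lambda>n::nat. 1 / real n) -` {x. f x \<noteq> 0}" unfolding NS_def by auto
  moreover have "finite ((\<lambda>n::nat. 1 / real n) -` {x. f x \<noteq> 0})"
    using assms finite_vimageI[OF _ inj_recip] unfolding FV_iff by blast
  ultimately show ?thesis by (rule finite_subset)
qed

lemma supp_finite: "f \<in> FV \<Longrightarrow> finite {x. f x \<noteq> 0}"
  unfolding FV_iff by auto

lemma Ssum_eq: assumes "finite A" "{x. f x \<noteq> 0} \<subseteq> A" shows "Ssum f = sum f A"
  unfolding Ssum_def by (rule sum.mono_neutral_left) (use assms in auto)

lemma Ssum_lin: assumes f: "f \<in> FV" and g: "g \<in> FV"
  shows "Ssum (\<lambda>x. a * f x + b * g x) = a * Ssum f + b * Ssum g"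
proof -
  define A where "A = {x. f x \<noteq> 0} \<union> {x. g x \<noteq> 0}"
  have A: "finite A" using supp_finite f g A_def by auto
  have "Ssum (\<lambda>x. a * f x + b * g x) = (\<Sum>x\<in>A. a * f x + b * g x)"
    by (rule Ssum_eq[OF A]) (auto simp: A_def)
  also have "\<dots> = a * (\<Sum>x\<in>A. f x) + b * (\<Sum>x\<in>A. g x)"
    by (simp add: sum.distrib sum_distrib_left)
  also have "\<dots> = a * Ssum f + b * Ssum g"
    using Ssum_eq[OF A, of f] Ssum_eq[OF A, of g] by (auto simp: A_def)
  finally show ?thesis .
qed

lemma Cf_lin: "f \<in> FV \<Longrightarrow> g \<in> FV \<Longrightarrow> Cf (\<lambda>x. a * f x + b * g x) j = a * Cf f j + b * Cf g j"
  by (simp add: Cf_def Ssum_lin)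

lemma Cf_out: "j \<noteq> 0 \<Longrightarrow> j \<notin> NS f \<Longrightarrow> Cf f j = 0"
  by (simp add: Cf_def NS_def)

lemma Pw_eq: assumes "finite J" "insert 0 (NS f) \<subseteq> J"
  shows "Pw w f = (\<Sum>j\<in>J. w j * \<bar>Cf f j\<bar>)"
  unfolding Pw_def by (rule sum.mono_neutral_left) (use assms Cf_out in auto)

lemma Pw_nonneg: "(\<forall>n. 0 \<le> w n) \<Longrightarrow> 0 \<le> Pw w f"
  unfolding Pw_def by (intro sum_nonneg) auto

lemma Pw_sn: assumes w: "\<forall>n. 0 \<le> w n" shows "seminormFV (Pw w)"
  unfolding seminormFV_def
proof (intro conjI ballI allI)
  fix f assume "f \<in> FV" then show "0 \<le> Pw w f" using Pw_nonneg w by auto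
next
  fix f g assume f: "f \<in> FV" and g: "g \<in> FV"
  define J where "J = insert 0 (NS f \<union> NS g \<union> NS (\<lambda>x. f x + g x))"
  have J: "finite J" unfolding J_def using finite_NS f g FV_add by auto
  have "Pw w (\<lambda>x. f x + g x) = (\<Sum>j\<in>J. w j * \<bar>Cf (\<lambda>x. f x + g x) j\<bar>)"
    by (rule Pw_eq[OF J]) (auto simp: J_def)
  also have "\<dots> \<le> (\<Sum>j\<in>J. w j * \<bar>Cf f j\<bar> + w j * \<bar>Cf g j\<bar>)"
  proof (intro sum_mono)
    fix j
    have "Cf (\<lambda>x. f x + g x) j = Cf f j + Cf g j" using Cf_lin[OF f g, of 1 1 j] by simp
    then have "\<bar>Cf (\<lambda>x. f x + g x) j\<bar> \<le> \<bar>Cf f j\<bar> + \<bar>Cf g j\<bar>" by simp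
    then show "w j * \<bar>Cf (\<lambda>x. f x + g x) j\<bar> \<le> w j * \<bar>Cf f j\<bar> + w j * \<bar>Cf g j\<bar>"
      using w by (metis distrib_left mult_left_mono)
  qed
  also have "\<dots> = Pw w f + Pw w g"
  proof -
    have "Pw w f = (\<Sum>j\<in>J. w j * \<bar>Cf f j\<bar>)" by (rule Pw_eq[OF J]) (auto simp: J_def)
    moreover have "Pw w g = (\<Sum>j\<in>J. w j * \<bar>Cf g j\<bar>)" by (rule Pw_eq[OF J]) (auto simp: J_def)
    ultimately show ?thesis by (simp add: sum.distrib)
  qed
  finally show "Pw w (\<lambda>x. f x + g x) \<le> Pw w f + Pw w g" .
next
  fix f c assume f: "f \<in> FV"
  define J where "J = insert 0 (NS f \<union> NS (\<lambda>x. c * f x))"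
  have J: "finite J" unfolding J_def using finite_NS f FV_smul by auto
  have "Pw w (\<lambda>x. c * f x) = (\<Sum>j\<in>J. w j * \<bar>Cf (\<lambda>x. c * f x) j\<bar>)"
    by (rule Pw_eq[OF J]) (auto simp: J_def)
  also have "\<dots> = (\<Sum>j\<in>J. \<bar>c\<bar> * (w j * \<bar>Cf f j\<bar>))"
  proof (intro sum.cong refl)
    fix j
    have "Cf (\<lambda>x. c * f x + 0 * f x) j = c * Cf f j + 0 * Cf f j" by (rule Cf_lin[OF f f])
    then show "w j * \<bar>Cf (\<lambda>x. c * f x) j\<bar> = \<bar>c\<bar> * (w j * \<bar>Cf f j\<bar>)" by (simp add: abs_mult)
  qed
  also have "\<dots> = \<bar>c\<bar> * Pw w f"
  proof -
    have "Pw w f = (\<Sum>j\<in>J. w j * \<bar>Cf f j\<bar>)" by (rule Pw_eq[OF J]) (auto simp: J_def)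
    then show ?thesis by (simp add: sum_distrib_left)
  qed
  finally show "Pw w (\<lambda>x. c * f x) = \<bar>c\<bar> * Pw w f" .
qed

lemma Mx_ge: assumes "f \<in> FV" "1 \<le> n" shows "\<bar>f (1 / real n)\<bar> \<le> Mx f"
proof (cases "n \<in> NS f")
  case True then show ?thesis unfolding Mx_def using finite_NS[OF assms(1)] by (intro Max_ge) auto
next
  case False
  then have "f (1 / real n) = 0" using assms unfolding NS_def by auto
  then show ?thesis unfolding Mx_def using finite_NS[OF assms(1)] by (simp add: Max_ge)
qed

lemma Mx_nonneg: assumes "f \<in> FV" shows "0 \<le> Mx f"
  unfolding Mx_def using finite_NS[OF assms(1)] by (simp add: Max_ge)

lemma Mx_le: assumes "f \<in> FV" "0 \<le> b" "\<And>n. 1 \<le> n \<Longrightarrow> \<bar>f (1 / real n)\<bar> \<le> b" shows "Mx f \<le> b"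
  unfolding Mx_def using finite_NS[OF assms(1)] assms(2,3) by (auto simp: NS_def)

lemma Mx_attained: assumes "f \<in> FV" shows "\<exists>n. 1 \<le> n \<and> Mx f \<le> \<bar>f (1 / real n)\<bar>"
proof -
  have "Mx f \<in> insert 0 ((\<lambda>n. \<bar>f (1 / real n)\<bar>) ` NS f)"
    unfolding Mx_def using finite_NS[OF assms] by (intro Max_in) auto
  then show ?thesis
  proof
    assume "Mx f = 0" then show ?thesis by (intro exI[of _ 1]) auto
  qed (auto simp: NS_def)
qed

lemma Mx_sn: "seminormFV Mx"
  unfolding seminormFV_def
proof (intro conjI ballI allI)
  fix f assume "f \<in> FV" then show "0 \<le> Mx f" by (rule Mx_nonneg)
next
  fix f g assume f: "f \<in> FV" and g: "g \<in> FV"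
  show "Mx (\<lambda>x. f x + g x) \<le> Mx f + Mx g"
  proof (rule Mx_le[OF FV_add[OF f g]])
    show "0 \<le> Mx f + Mx g" using Mx_nonneg f g by (simp add: add_nonneg_nonneg)
    fix n :: nat assume n: "1 \<le> n"
    have "\<bar>f (1 / real n) + g (1 / real n)\<bar> \<le> \<bar>f (1 / real n)\<bar> + \<bar>g (1 / real n)\<bar>" by (rule abs_triangle_ineq)
    also have "\<dots> \<le> Mx f + Mx g" using Mx_ge[OF f n] Mx_ge[OF g n] by linarith
    finally show "\<bar>f (1 / real n) + g (1 / real n)\<bar> \<le> Mx f + Mx g" .
  qed
next
  fix f c assume f: "f \<in> FV"
  show "Mx (\<lambda>x. c * f x) = \<bar>c\<bar> * Mx f"
  proof (rule antisym)
    show "Mx (\<lambda>x. c * f x) \<le> \<bar>c\<bar> * Mx f"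
    proof (rule Mx_le[OF FV_smul[OF f]])
      show "0 \<le> \<bar>c\<bar> * Mx f" using Mx_nonneg[OF f] by simp
      fix n :: nat assume n: "1 \<le> n"
      show "\<bar>c * f (1 / real n)\<bar> \<le> \<bar>c\<bar> * Mx f" using Mx_ge[OF f n] by (simp add: abs_mult mult_left_mono)
    qed
    show "\<bar>c\<bar> * Mx f \<le> Mx (\<lambda>x. c * f x)"
    proof (cases "c = 0")
      case True then show ?thesis using Mx_nonneg[OF FV_smul[OF f, of 0]] by simp
    next
      case False
      have "Mx f \<le> Mx (\<lambda>x. c * f x) / \<bar>c\<bar>"
      proof (rule Mx_le[OF f])
        show "0 \<le> Mx (\<lambda>x. c * f x) / \<bar>c\<bar>" using Mx_nonneg[OF FV_smul[OF f]] by simp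
        fix n :: nat assume n: "1 \<le> n"
        have "\<bar>c * f (1 / real n)\<bar> \<le> Mx (\<lambda>x. c * f x)" using Mx_ge[OF FV_smul[OF f] n] by simp
        then show "\<bar>f (1 / real n)\<bar> \<le> Mx (\<lambda>x. c * f x) / \<bar>c\<bar>" using False by (simp add: abs_mult field_simps)
      qed
      then show ?thesis using False by (simp add: field_simps)
    qed
  qed
qed

lemma sn_comb: assumes "seminormFV p" "seminormFV r" "0 \<le> l"
  shows "seminormFV (\<lambda>f. p f + l * r f)"
  using assms unfolding seminormFV_def
  by (auto simp: algebra_simps intro: add_mono mult_left_mono add_nonneg_nonneg)
    (smt (verit, best) distrib_left mult_left_mono)

lemma qq_sn: "adm w \<Longrightarrow> 0 \<le> l \<Longrightarrow> seminormFV (qq w l)"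
  unfolding qq_def adm_def using sn_comb[OF Pw_sn Mx_sn, of w l] by (auto simp: less_imp_le)

lemma Pw_scale: "Pw (\<lambda>n. r * w n) f = r * Pw w f"
  unfolding Pw_def by (simp add: sum_distrib_left mult.assoc)

lemma Pw_mono: "\<forall>n. w n \<le> w' n \<Longrightarrow> Pw w f \<le> Pw w' f"
  unfolding Pw_def by (intro sum_mono mult_right_mono) auto

definition goodL :: "real set \<Rightarrow> bool" where
  "goodL L \<longleftrightarrow> L \<noteq> {} \<and> (\<forall>l\<in>L. 0 \<le> l) \<and> (\<forall>l\<in>L. \<forall>r>0. r * l \<in> L) \<and> (\<forall>l1\<in>L. \<forall>l2\<in>L. max l1 l2 \<in> L)"

lemma goodL0: "goodL {0}" unfolding goodL_def by auto
lemma goodL1: "goodL {l. 0 \<le> l}" unfolding goodL_def by auto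

lemma adm_one: "adm (\<lambda>n. 1 / (real n + 1))"
  unfolding adm_def using LIMSEQ_inverse_real_of_nat_add[of 0] by (auto simp: inverse_eq_divide add.commute)

lemma goodQ_QQ: assumes L: "goodL L" shows "goodQ (QQ L)"
  unfolding goodQ_def
proof (intro conjI ballI allI impI)
  obtain l where l: "l \<in> L" using L unfolding goodL_def by auto
  then show "QQ L \<noteq> {}" unfolding QQ_def using adm_one by blast
next
  fix q assume "q \<in> QQ L"
  then obtain w l where q: "q = qq w l" "adm w" "l \<in> L" unfolding QQ_def by auto
  then show "seminormFV q" using qq_sn L unfolding goodL_def by auto
next
  fix q and r :: real assume qa: "q \<in> QQ L" and r: "r > 0"
  then obtain w l where q: "q = qq w l" "adm w" "l \<in> L" unfolding QQ_def by auto
  have "adm (\<lambda>n. r * w n)" using q(2) r unfolding adm_def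
    using tendsto_mult_right_zero by auto
  moreover have "r * l \<in> L" using L q(3) r unfolding goodL_def by auto
  moreover have "(\<lambda>f. r * q f) = qq (\<lambda>n. r * w n) (r * l)"
    unfolding q(1) qq_def by (auto simp: Pw_scale algebra_simps)
  ultimately show "(\<lambda>f. r * q f) \<in> QQ L" unfolding QQ_def by blast
next
  fix q1 q2 assume "q1 \<in> QQ L" "q2 \<in> QQ L"
  then obtain w1 l1 w2 l2 where q: "q1 = qq w1 l1" "adm w1" "l1 \<in> L" "q2 = qq w2 l2" "adm w2" "l2 \<in> L"
    unfolding QQ_def by auto
  define w where "w = (\<lambda>n. max (w1 n) (w2 n))"
  have "adm w" using q(2,5) unfolding adm_def w_def
    using tendsto_max[of w1 0 sequentially w2 0] by (auto simp: less_max_iff_disj)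
  moreover have "max l1 l2 \<in> L" using L q unfolding goodL_def by auto
  moreover have "\<forall>f\<in>FV. q1 f \<le> qq w (max l1 l2) f \<and> q2 f \<le> qq w (max l1 l2) f"
  proof
    fix f assume f: "f \<in> FV"
    have "Pw w1 f \<le> Pw w f" "Pw w2 f \<le> Pw w f" by (auto intro!: Pw_mono simp: w_def)
    moreover have "l1 * Mx f \<le> max l1 l2 * Mx f" "l2 * Mx f \<le> max l1 l2 * Mx f"
      using Mx_nonneg[OF f] by (auto intro: mult_right_mono)
    ultimately show "q1 f \<le> qq w (max l1 l2) f \<and> q2 f \<le> qq w (max l1 l2) f"
      unfolding q qq_def by auto
  qed
  ultimately show "\<exists>q\<in>QQ L. \<forall>f\<in>FV. q1 f \<le> q f \<and> q2 f \<le> q f" unfolding QQ_def by blast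
qed


lemma sgn_self: "sgn (x::real) * x = \<bar>x\<bar>"
  by (cases "x > 0"; cases "x = 0") auto

lemma abs_sgn_le: "\<bar>sgn (x::real) * y\<bar> \<le> \<bar>y\<bar>"
  by (cases "x > 0"; cases "x = 0") auto

lemma Pw_split: assumes "g \<in> FV"
  shows "Pw w g = w 0 * \<bar>Ssum g\<bar> + (\<Sum>n\<in>NS g. w n * \<bar>g (1 / real n)\<bar>)"
proof -
  have "0 \<notin> NS g" unfolding NS_def by auto
  then have "Pw w g = w 0 * \<bar>Cf g 0\<bar> + (\<Sum>n\<in>NS g. w n * \<bar>Cf g n\<bar>)"
    unfolding Pw_def using finite_NS[OF assms] by simp
  also have "(\<Sum>n\<in>NS g. w n * \<bar>Cf g n\<bar>) = (\<Sum>n\<in>NS g. w n * \<bar>g (1 / real n)\<bar>)"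
    by (intro sum.cong refl) (auto simp: Cf_def NS_def)
  finally show ?thesis by (simp add: Cf_def)
qed

lemma Pw_ge0: assumes "\<forall>n. 0 \<le> w n" "f \<in> FV" shows "w 0 * \<bar>Ssum f\<bar> \<le> Pw w f"
proof -
  have "w 0 * \<bar>Cf f 0\<bar> \<le> Pw w f"
    unfolding Pw_def using assms
    by (intro member_le_sum) (auto simp: finite_NS)
  then show ?thesis by (simp add: Cf_def)
qed

lemma Pw_ge_part: assumes w: "\<forall>n. 0 \<le> w n" and f: "f \<in> FV" and g: "g \<in> FV"
  shows "(\<Sum>n\<in>NS g. w n * \<bar>f (1 / real n)\<bar>) \<le> Pw w f"
proof -
  define J where "J = insert 0 (NS f \<union> NS g)"
  have J: "finite J" using finite_NS f g J_def by auto
  have "(\<Sum>n\<in>NS g. w n * \<bar>f (1 / real n)\<bar>) = (\<Sum>n\<in>NS g. w n * \<bar>Cf f n\<bar>)"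
    by (intro sum.cong refl) (auto simp: Cf_def NS_def)
  also have "\<dots> \<le> (\<Sum>n\<in>J. w n * \<bar>Cf f n\<bar>)"
    using w J by (intro sum_mono2) (auto simp: J_def)
  also have "\<dots> = Pw w f" by (rule Pw_eq[OF J, symmetric]) (auto simp: J_def)
  finally show ?thesis .
qed

lemma norming_QQ: assumes L: "goodL L" shows "norming (QQ L)"
  unfolding norming_def
proof (intro ballI)
  fix q g assume q: "q \<in> QQ L" and g: "g \<in> FV"
  then obtain w l where ql: "q = qq w l" "adm w" "l \<in> L" unfolding QQ_def by auto
  have w0: "\<forall>n. 0 \<le> w n" using ql(2) unfolding adm_def by (auto simp: less_imp_le)
  have l0: "0 \<le> l" using L ql(3) unfolding goodL_def by auto
  define A where "A = w 0 * \<bar>Ssum g\<bar>"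
  define B where "B = (\<Sum>n\<in>NS g. w n * \<bar>g (1 / real n)\<bar>)"
  define C where "C = l * Mx g"
  have qg: "q g = A + B + C" unfolding ql(1) qq_def A_def B_def C_def using Pw_split[OF g] by simp
  have A0: "0 \<le> A" and B0: "0 \<le> B" and C0: "0 \<le> C"
    unfolding A_def B_def C_def using w0 l0 Mx_nonneg[OF g] by (auto intro: sum_nonneg)
  have Pw0: "\<And>f. 0 \<le> Pw w f" using Pw_nonneg w0 by auto
  define \<phi>0 where "\<phi>0 = (\<lambda>f. w 0 * sgn (Ssum g) * Ssum f)"
  define \<phi>1 where "\<phi>1 = (\<lambda>f. \<Sum>n\<in>NS g. w n * sgn (g (1 / real n)) * f (1 / real n))"
  obtain m where m: "1 \<le> m" "Mx g \<le> \<bar>g (1 / real m)\<bar>" using Mx_attained[OF g] by auto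
  define \<phi>2 where "\<phi>2 = (\<lambda>f. l * sgn (g (1 / real m)) * f (1 / real m))"
  have lin0: "linear_on_FV \<phi>0" unfolding \<phi>0_def by (intro linear_on_FVI) (simp add: Ssum_lin algebra_simps)
  have lin1: "linear_on_FV \<phi>1" unfolding \<phi>1_def
    by (intro linear_on_FVI) (simp add: algebra_simps sum.distrib sum_distrib_left)
  have lin2: "linear_on_FV \<phi>2" unfolding \<phi>2_def by (intro linear_on_FVI) (simp add: algebra_simps)
  have b0: "\<forall>f\<in>FV. \<bar>\<phi>0 f\<bar> \<le> q f"
  proof
    fix f assume f: "f \<in> FV"
    have "\<bar>\<phi>0 f\<bar> = w 0 * \<bar>sgn (Ssum g) * Ssum f\<bar>" unfolding \<phi>0_def using w0 by (simp add: abs_mult)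
    also have "\<dots> \<le> w 0 * \<bar>Ssum f\<bar>" using w0 abs_sgn_le by (simp add: mult_left_mono)
    also have "\<dots> \<le> Pw w f" using Pw_ge0[OF w0 f] .
    also have "\<dots> \<le> q f" unfolding ql(1) qq_def using l0 Mx_nonneg[OF f] by simp
    finally show "\<bar>\<phi>0 f\<bar> \<le> q f" .
  qed
  have b1: "\<forall>f\<in>FV. \<bar>\<phi>1 f\<bar> \<le> q f"
  proof
    fix f assume f: "f \<in> FV"
    have "\<bar>\<phi>1 f\<bar> \<le> (\<Sum>n\<in>NS g. \<bar>w n * sgn (g (1 / real n)) * f (1 / real n)\<bar>)"
      unfolding \<phi>1_def by (rule sum_abs)
    also have "\<dots> \<le> (\<Sum>n\<in>NS g. w n * \<bar>f (1 / real n)\<bar>)"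
    proof (intro sum_mono)
      fix n
      have "\<bar>w n * sgn (g (1 / real n)) * f (1 / real n)\<bar> = w n * \<bar>sgn (g (1 / real n)) * f (1 / real n)\<bar>"
        using w0 by (simp add: abs_mult mult.assoc)
      also have "\<dots> \<le> w n * \<bar>f (1 / real n)\<bar>" using w0 abs_sgn_le by (simp add: mult_left_mono)
      finally show "\<bar>w n * sgn (g (1 / real n)) * f (1 / real n)\<bar> \<le> w n * \<bar>f (1 / real n)\<bar>" .
    qed
    also have "\<dots> \<le> Pw w f" using Pw_ge_part[OF w0 f g] .
    also have "\<dots> \<le> q f" unfolding ql(1) qq_def using l0 Mx_nonneg[OF f] by simp
    finally show "\<bar>\<phi>1 f\<bar> \<le> q f" .
  qed
  have b2: "\<forall>f\<in>FV. \<bar>\<phi>2 f\<bar> \<le> q f"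
  proof
    fix f assume f: "f \<in> FV"
    have "\<bar>\<phi>2 f\<bar> = l * \<bar>sgn (g (1 / real m)) * f (1 / real m)\<bar>" unfolding \<phi>2_def using l0 by (simp add: abs_mult)
    also have "\<dots> \<le> l * \<bar>f (1 / real m)\<bar>" using l0 abs_sgn_le by (simp add: mult_left_mono)
    also have "\<dots> \<le> l * Mx f" using l0 Mx_ge[OF f m(1)] by (simp add: mult_left_mono)
    also have "\<dots> \<le> q f" unfolding ql(1) qq_def using Pw0 by simp
    finally show "\<bar>\<phi>2 f\<bar> \<le> q f" .
  qed
  have g0: "\<bar>\<phi>0 g\<bar> = A" unfolding \<phi>0_def A_def using w0 by (simp add: abs_mult mult.assoc sgn_self)
  have g1: "\<bar>\<phi>1 g\<bar> = B" unfolding \<phi>1_def B_def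
  proof -
    have "(\<Sum>n\<in>NS g. w n * sgn (g (1 / real n)) * g (1 / real n)) = B"
      unfolding B_def by (intro sum.cong refl) (simp add: mult.assoc sgn_self)
    then show "\<bar>\<Sum>n\<in>NS g. w n * sgn (g (1 / real n)) * g (1 / real n)\<bar> = (\<Sum>n\<in>NS g. w n * \<bar>g (1 / real n)\<bar>)"
      using B0 B_def by simp
  qed
  have g2: "C \<le> \<bar>\<phi>2 g\<bar>" unfolding \<phi>2_def C_def using l0 m(2)
    by (simp add: abs_mult mult.assoc sgn_self mult_left_mono)
  show "\<exists>\<phi>. linear_on_FV \<phi> \<and> (\<forall>f\<in>FV. \<bar>\<phi> f\<bar> \<le> q f) \<and> q g \<le> 3 * \<bar>\<phi> g\<bar>"
  proof (cases "B \<le> A \<and> C \<le> A")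
    case True then show ?thesis using lin0 b0 g0 qg by (intro exI[of _ \<phi>0]) auto
  next
    case False
    show ?thesis
    proof (cases "C \<le> B")
      case True then show ?thesis using False lin1 b1 g1 qg by (intro exI[of _ \<phi>1]) auto
    next
      case False2: False
      then show ?thesis using False lin2 b2 g2 qg by (intro exI[of _ \<phi>2]) auto
    qed
  qed
qed


definition Ef :: "nat \<Rightarrow> fvec" where
  "Ef j = (if j = 0 then delta 0 else (\<lambda>x. delta (1 / real j) x - delta 0 x))"

lemma conv_seq_iff: "x \<in> conv_seq \<longleftrightarrow> x = 0 \<or> (\<exists>n::nat. 1 \<le> n \<and> x = 1 / real n)"
  unfolding conv_seq_def by auto

lemma recip_ne0: "1 \<le> n \<Longrightarrow> 1 / real n \<noteq> 0" by auto

lemma Ef_FV: "Ef j \<in> FV"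
proof (cases "j = 0")
  case True then show ?thesis using delta_FV[of 0] by (simp add: Ef_def conv_seq_def)
next
  case False
  then have "1 / real j \<in> conv_seq" unfolding conv_seq_iff by auto
  then show ?thesis using False FV_diff delta_FV[of 0] delta_FV[of "1 / real j"]
    by (simp add: Ef_def conv_seq_def)
qed

lemma Ef_eval: "1 \<le> m \<Longrightarrow> Ef j (1 / real m) = (if j = m then 1 else 0)"
  using inj_recip unfolding Ef_def delta_def by (auto simp: inj_def)

lemma Ssum_delta: "Ssum (delta x) = 1"
proof -
  have "{y. delta x y \<noteq> 0} = {x}" by (auto simp: delta_def)
  then show ?thesis by (simp add: Ssum_def delta_def)
qed

lemma Ssum_linear: "linear_on_FV Ssum"
  by (intro linear_on_FVI) (simp add: Ssum_lin)

lemma eval_linear: "linear_on_FV (\<lambda>f. f y)"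
  by (intro linear_on_FVI) simp

lemma Ssum_Ef: "Ssum (Ef j) = (if j = 0 then 1 else 0)"
proof (cases "j = 0")
  case True then show ?thesis by (simp add: Ef_def Ssum_delta)
next
  case False
  have "1 / real j \<in> conv_seq" using False unfolding conv_seq_iff by auto
  then have "Ssum (\<lambda>x. delta (1 / real j) x - delta 0 x) = Ssum (delta (1 / real j)) - Ssum (delta 0)"
    using linear_on_FV_diff[OF Ssum_linear] delta_FV by (simp add: conv_seq_def)
  then show ?thesis using False by (simp add: Ef_def Ssum_delta)
qed

lemma Ssum_decomp: assumes f: "f \<in> FV"
  shows "Ssum f = f 0 + (\<Sum>n\<in>NS f. f (1 / real n))"
proof -
  define A where "A = insert 0 ((\<lambda>n. 1 / real n) ` NS f)"
  have A: "finite A" using finite_NS[OF f] A_def by auto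
  have sub: "{x. f x \<noteq> 0} \<subseteq> A"
  proof
    fix x assume x: "x \<in> {x. f x \<noteq> 0}"
    then have "x \<in> conv_seq" using f unfolding FV_iff by auto
    then show "x \<in> A" using x unfolding conv_seq_iff A_def NS_def by auto
  qed
  have n0: "0 \<notin> (\<lambda>n. 1 / real n) ` NS f" unfolding NS_def by auto
  have "Ssum f = sum f A" by (rule Ssum_eq[OF A sub])
  also have "\<dots> = f 0 + sum f ((\<lambda>n. 1 / real n) ` NS f)"
    unfolding A_def using n0 finite_NS[OF f] by simp
  also have "sum f ((\<lambda>n. 1 / real n) ` NS f) = (\<Sum>n\<in>NS f. f (1 / real n))"
    using inj_recip by (subst sum.reindex) (auto intro: inj_on_subset)
  finally show ?thesis .
qed

lemma decomp: assumes f: "f \<in> FV"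
  shows "f = (\<lambda>x. \<Sum>j\<in>insert 0 (NS f). Cf f j * Ef j x)"
proof
  fix x
  have n0: "0 \<notin> NS f" unfolding NS_def by auto
  have fin: "finite (NS f)" using finite_NS[OF f] .
  have "(\<Sum>j\<in>insert 0 (NS f). Cf f j * Ef j x) = Ssum f * delta 0 x + (\<Sum>n\<in>NS f. f (1 / real n) * (delta (1 / real n) x - delta 0 x))"
  proof -
    have "(\<Sum>j\<in>NS f. Cf f j * Ef j x) = (\<Sum>n\<in>NS f. f (1 / real n) * (delta (1 / real n) x - delta 0 x))"
      using n0 by (intro sum.cong refl) (auto simp: Cf_def Ef_def)
    then show ?thesis using n0 fin by (simp add: Cf_def Ef_def)
  qed
  also have "\<dots> = Ssum f * delta 0 x + (\<Sum>n\<in>NS f. f (1 / real n) * delta (1 / real n) x) - (\<Sum>n\<in>NS f. f (1 / real n)) * delta 0 x"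
    by (simp add: algebra_simps sum_subtractf sum_distrib_left)
  also have "\<dots> = f x"
  proof (cases "x = 0")
    case True
    have "(\<Sum>n\<in>NS f. f (1 / real n) * delta (1 / real n) x) = 0"
      using True by (intro sum.neutral) (auto simp: delta_def NS_def)
    then show ?thesis using True Ssum_decomp[OF f] by (simp add: delta_def)
  next
    case False
    have "(\<Sum>n\<in>NS f. f (1 / real n) * delta (1 / real n) x) = f x"
    proof (cases "\<exists>m\<in>NS f. x = 1 / real m")
      case True
      then obtain m where m: "m \<in> NS f" "x = 1 / real m" by auto
      have "(\<Sum>n\<in>NS f. f (1 / real n) * delta (1 / real n) x) = (\<Sum>n\<in>NS f. if n = m then f x else 0)"
        using m inj_recip by (intro sum.cong refl) (auto simp: delta_def inj_def)
      also have "\<dots> = f x" using m fin by simp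
      finally show ?thesis .
    next
      case False2: False
      have "f x = 0"
      proof (rule ccontr)
        assume "f x \<noteq> 0"
        then have "x \<in> conv_seq" using f unfolding FV_iff by auto
        then obtain m where "1 \<le> m" "x = 1 / real m" using False unfolding conv_seq_iff by auto
        then show False using False2 \<open>f x \<noteq> 0\<close> unfolding NS_def by auto
      qed
      moreover have "(\<Sum>n\<in>NS f. f (1 / real n) * delta (1 / real n) x) = 0"
        using False2 by (intro sum.neutral) (auto simp: delta_def)
      ultimately show ?thesis by simp
    qed
    then show ?thesis using False by (simp add: delta_def)
  qed
  finally show "f x = (\<Sum>j\<in>insert 0 (NS f). Cf f j * Ef j x)" by simp
qed

lemma comb_FV: "finite B \<Longrightarrow> (\<lambda>x. \<Sum>j\<in>B. c j * Ef j x) \<in> FV"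
  using FV_sum Ef_FV by auto

lemma comb_eval: assumes B: "finite B" and m: "1 \<le> m"
  shows "(\<Sum>j\<in>B. c j * Ef j (1 / real m)) = (if m \<in> B then c m else 0)"
proof -
  have "(\<Sum>j\<in>B. c j * Ef j (1 / real m)) = (\<Sum>j\<in>B. if j = m then c m else 0)"
    using m by (intro sum.cong refl) (auto simp: Ef_eval)
  then show ?thesis using B by simp
qed

lemma comb_Ssum: assumes B: "finite B" "0 \<notin> B"
  shows "Ssum (\<lambda>x. \<Sum>j\<in>B. c j * Ef j x) = 0"
proof -
  have "Ssum (\<lambda>x. \<Sum>j\<in>B. c j * Ef j x) = (\<Sum>j\<in>B. c j * Ssum (Ef j))"
    by (rule linear_on_FV_sum[OF Ssum_linear B(1)]) (rule Ef_FV)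
  also have "\<dots> = 0" using B(2) by (intro sum.neutral) (auto simp: Ssum_Ef)
  finally show ?thesis .
qed

lemma comb_NS: assumes B: "finite B" shows "NS (\<lambda>x. \<Sum>j\<in>B. c j * Ef j x) \<subseteq> B"
  using comb_eval[OF B] unfolding NS_def by (auto split: if_splits)

lemma comb_Pw: assumes B: "finite B" "0 \<notin> B"
  shows "Pw w (\<lambda>x. \<Sum>j\<in>B. c j * Ef j x) = (\<Sum>j\<in>B. w j * \<bar>c j\<bar>)"
proof -
  let ?v = "\<lambda>x. \<Sum>j\<in>B. c j * Ef j x"
  have "Pw w ?v = (\<Sum>j\<in>insert 0 B. w j * \<bar>Cf ?v j\<bar>)"
    by (rule Pw_eq) (use B comb_NS[OF B(1)] in auto)
  also have "\<dots> = w 0 * \<bar>Cf ?v 0\<bar> + (\<Sum>j\<in>B. w j * \<bar>Cf ?v j\<bar>)" using B by simp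
  also have "Cf ?v 0 = 0" using comb_Ssum[OF B] by (simp add: Cf_def)
  also have "(\<Sum>j\<in>B. w j * \<bar>Cf ?v j\<bar>) = (\<Sum>j\<in>B. w j * \<bar>c j\<bar>)"
  proof (intro sum.cong refl)
    fix j assume j: "j \<in> B"
    then have "1 \<le> j" using B(2) by (cases j) auto
    then show "w j * \<bar>Cf ?v j\<bar> = w j * \<bar>c j\<bar>" using comb_eval[OF B(1), of j c] j by (simp add: Cf_def)
  qed
  finally show ?thesis by simp
qed

lemma comb_Mx: assumes B: "finite B" and b: "0 \<le> b" "\<And>j. j \<in> B \<Longrightarrow> \<bar>c j\<bar> \<le> b"
  shows "Mx (\<lambda>x. \<Sum>j\<in>B. c j * Ef j x) \<le> b"
  by (rule Mx_le[OF comb_FV[OF B]]) (use b comb_eval[OF B] in auto)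


lemma recip_gap1: assumes "1 \<le> n" "n < m"
  shows "1 / real m \<le> 1 / real n - 1 / (real m * (real m + 1))"
proof -
  have n1: "real n \<ge> 1" and nm: "real n + 1 \<le> real m" using assms by auto
  have "1 / real m \<le> 1 / (real n + 1)" using nm n1 by (intro divide_left_mono) auto
  also have "0 < real n + real n * real n" using n1 by (intro add_pos_pos mult_pos_pos) auto
  then have "1 / (real n + 1) = 1 / real n - 1 / (real n * (real n + 1))" using n1 by (simp add: field_simps)
  also have "1 / (real m * (real m + 1)) \<le> 1 / (real n * (real n + 1))"
    using nm n1 by (intro divide_left_mono mult_mono) auto
  then have "1 / real n - 1 / (real n * (real n + 1)) \<le> 1 / real n - 1 / (real m * (real m + 1))" by linarith
  finally show ?thesis .
qed

lemma recip_gap2: assumes "1 \<le> m" "m < n"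
  shows "1 / real n \<le> 1 / real m - 1 / (real m * (real m + 1))"
proof -
  have m1: "real m \<ge> 1" and nm: "real m + 1 \<le> real n" using assms by auto
  have "1 / real n \<le> 1 / (real m + 1)" using nm m1 by (intro divide_left_mono) auto
  also have "0 < real m + real m * real m" using m1 by (intro add_pos_pos mult_pos_pos) auto
  then have "1 / (real m + 1) = 1 / real m - 1 / (real m * (real m + 1))" using m1 by (simp add: field_simps)
  finally show ?thesis .
qed

lemma isolated: assumes m: "1 \<le> m" and x: "x \<in> conv_seq" and d: "\<bar>x - 1 / real m\<bar> < 1 / (real m * (real m + 1))"
  shows "x = 1 / real m"
proof -
  have m1: "real m \<ge> 1" using m by auto
  have pos: "0 < 1 / (real m * (real m + 1))" using m1 by simp
  consider "x = 0" | n where "1 \<le> n" "x = 1 / real n" using x unfolding conv_seq_iff by auto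
  then show ?thesis
  proof cases
    case 1
    have "1 / (real m * (real m + 1)) \<le> 1 / real m" using m1 by (intro divide_left_mono) auto
    then show ?thesis using d 1 by simp
  next
    case 2
    show ?thesis
    proof (cases "n = m")
      case True then show ?thesis using 2 by simp
    next
      case False
      show ?thesis
      proof (cases "n < m")
        case True
        have "1 / real m \<le> 1 / real n - 1 / (real m * (real m + 1))" using recip_gap1[OF 2(1) True] .
        then show ?thesis using d 2 by (simp add: abs_if split: if_splits)
      next
        case False2: False
        then have "m < n" using False by linarith
        have "1 / real n \<le> 1 / real m - 1 / (real m * (real m + 1))" using recip_gap2[OF m \<open>m < n\<close>] .
        then show ?thesis using d 2 by (simp add: abs_if split: if_splits)
      qed
    qed
  qed
qed

lemma Pw_Ef: assumes "1 \<le> n" shows "Pw w (Ef n) = w n"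
proof -
  have "Pw w (\<lambda>x. \<Sum>j\<in>{n}. 1 * Ef j x) = (\<Sum>j\<in>{n}. w j * \<bar>1\<bar>)"
    by (rule comb_Pw) (use assms in auto)
  then show ?thesis by simp
qed

lemma Mx_Ef: assumes "1 \<le> n" shows "Mx (Ef n) = 1"
proof (rule antisym)
  have "Mx (\<lambda>x. \<Sum>j\<in>{n}. 1 * Ef j x) \<le> 1" by (rule comb_Mx) auto
  then show "Mx (Ef n) \<le> 1" by simp
  have "\<bar>Ef n (1 / real n)\<bar> \<le> Mx (Ef n)" using Mx_ge[OF Ef_FV assms] .
  then show "1 \<le> Mx (Ef n)" using Ef_eval[OF assms] by simp
qed

abbreviation T0 :: "fvec topology" where "T0 \<equiv> semtop (QQ {0})"
abbreviation Tnu :: "fvec topology" where "Tnu \<equiv> semtop (QQ {l. 0 \<le> l})"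

lemma gQ0: "goodQ (QQ {0})" using goodQ_QQ[OF goodL0] .
lemma gQ1: "goodQ (QQ {l. 0 \<le> l})" using goodQ_QQ[OF goodL1] .

lemma delta_cont: "continuous_map (top_of_set conv_seq) T0 delta"
  unfolding continuous_map_def
proof (intro conjI allI impI)
  show "delta \<in> topspace (top_of_set conv_seq) \<rightarrow> topspace T0"
    using delta_FV topspace_semtop[OF gQ0] by auto
  fix U assume U: "openin T0 U"
  show "openin (top_of_set conv_seq) {x \<in> topspace (top_of_set conv_seq). delta x \<in> U}"
    unfolding openin_euclidean_subtopology_iff
  proof (intro conjI ballI)
    show "{x \<in> topspace (top_of_set conv_seq). delta x \<in> U} \<subseteq> conv_seq" by auto
    fix x0 assume x0: "x0 \<in> {x \<in> topspace (top_of_set conv_seq). delta x \<in> U}"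
    then have x0c: "x0 \<in> conv_seq" and x0U: "delta x0 \<in> U" by auto
    consider "x0 = 0" | m where "1 \<le> m" "x0 = 1 / real m" using x0c unfolding conv_seq_iff by auto
    then show "\<exists>e>0. \<forall>x'\<in>conv_seq. dist x' x0 < e \<longrightarrow> x' \<in> {x \<in> topspace (top_of_set conv_seq). delta x \<in> U}"
    proof cases
      case 1
      obtain q where q: "q \<in> QQ {0}" "\<forall>g\<in>FV. q (\<lambda>x. g x - delta 0 x) < 1 \<longrightarrow> g \<in> U"
        using semopenD[OF gQ0 U x0U] 1 by auto
      then obtain w where w: "q = qq w 0" "adm w" unfolding QQ_def by auto
      have "w \<longlonglongrightarrow> 0" using w(2) unfolding adm_def by auto
      then obtain N where N: "\<forall>n\<ge>N. dist (w n) 0 < 1"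
        unfolding lim_sequentially by (meson zero_less_one)
      show ?thesis
      proof (intro exI[of _ "1 / (real N + 1)"] conjI ballI impI)
        show "0 < 1 / (real N + 1)" by simp
        fix x' assume x': "x' \<in> conv_seq" "dist x' x0 < 1 / (real N + 1)"
        consider "x' = 0" | n where "1 \<le> n" "x' = 1 / real n" using x'(1) unfolding conv_seq_iff by auto
        then show "x' \<in> {x \<in> topspace (top_of_set conv_seq). delta x \<in> U}"
        proof cases
          case 1 then show ?thesis using x0U \<open>x0 = 0\<close> x' by auto
        next
          case 2
          have "1 / real n < 1 / (real N + 1)" using x'(2) 2 \<open>x0 = 0\<close> by (simp add: dist_real_def)
          then have "real N + 1 < real n" using 2(1) by (simp add: frac_less2 divide_less_cancel field_simps)
          then have "N \<le> n" by linarith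
          then have "\<bar>w n\<bar> < 1" using N by (simp add: dist_real_def)
          then have wn: "w n < 1" by linarith
          have "(\<lambda>x. delta (1 / real n) x - delta 0 x) = Ef n" using 2(1) by (simp add: Ef_def)
          then have "q (\<lambda>x. delta (1 / real n) x - delta 0 x) < 1"
            using wn w(1) Pw_Ef[OF 2(1)] by (simp add: qq_def)
          moreover have "delta (1 / real n) \<in> FV" using delta_FV x'(1) 2 by simp
          ultimately have "delta x' \<in> U" using q(2) 2 by auto
          then show ?thesis using x' by auto
        qed
      qed
    next
      case 2
      show ?thesis
      proof (intro exI[of _ "1 / (real m * (real m + 1))"] conjI ballI impI)
        show "0 < 1 / (real m * (real m + 1))" using 2 by simp
        fix x' assume x': "x' \<in> conv_seq" "dist x' x0 < 1 / (real m * (real m + 1))"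
        then have "x' = x0" using isolated[OF 2(1) x'(1)] 2 by (simp add: dist_real_def)
        then show "x' \<in> {x \<in> topspace (top_of_set conv_seq). delta x \<in> U}" using x0 by auto
      qed
    qed
  qed
qed


lemma vt_top: "vector_topology T \<Longrightarrow> topspace T = FV"
  unfolding vector_topology_def by auto

lemma vt_transl: assumes vt: "vector_topology T" and b: "b \<in> FV"
  shows "continuous_map T T (\<lambda>h. vadd h b)"
proof -
  have "continuous_map T (prod_topology T T) (\<lambda>h. (h, b))"
    using b vt_top[OF vt] by (intro continuous_map_pairedI) (auto simp: continuous_map_id[unfolded id_def])
  then have "continuous_map T T ((\<lambda>(f, g). vadd f g) \<circ> (\<lambda>h. (h, b)))"
    using continuous_map_compose vt unfolding vector_topology_def by blast
  then show ?thesis by (simp add: o_def)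
qed

lemma vt_scale: assumes vt: "vector_topology T"
  shows "continuous_map T T (\<lambda>h. smul a h)"
proof -
  have "continuous_map T (prod_topology euclideanreal T) (\<lambda>h. (a, h))"
    by (intro continuous_map_pairedI) (auto simp: continuous_map_id[unfolded id_def])
  then have "continuous_map T T ((\<lambda>(c, f). smul c f) \<circ> (\<lambda>h. (a, h)))"
    using continuous_map_compose vt unfolding vector_topology_def by blast
  then show ?thesis by (simp add: o_def)
qed

lemma vt_line: assumes vt: "vector_topology T" and e: "e \<in> FV"
  shows "continuous_map euclideanreal T (\<lambda>c. smul c e)"
proof -
  have "continuous_map euclideanreal (prod_topology euclideanreal T) (\<lambda>c. (c, e))"
    using e vt_top[OF vt] by (intro continuous_map_pairedI) (auto simp: continuous_map_id[unfolded id_def])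
  then have "continuous_map euclideanreal T ((\<lambda>(c, f). smul c f) \<circ> (\<lambda>c. (c, e)))"
    using continuous_map_compose vt unfolding vector_topology_def by blast
  then show ?thesis by (simp add: o_def)
qed

lemma preimage_open: "continuous_map X Y F \<Longrightarrow> openin Y U \<Longrightarrow> openin X {x \<in> topspace X. F x \<in> U}"
  unfolding continuous_map_def by auto

lemma convex_comb: "vconvex B \<Longrightarrow> f \<in> B \<Longrightarrow> g \<in> B \<Longrightarrow> 0 \<le> t \<Longrightarrow> t \<le> 1 \<Longrightarrow> (\<lambda>x. t * f x + (1 - t) * g x) \<in> B"
  unfolding vconvex_def vadd_def smul_def by auto

definition absconvex :: "fvec set \<Rightarrow> bool" where
  "absconvex B \<longleftrightarrow> B \<subseteq> FV \<and> vconvex B \<and> (\<lambda>x. 0) \<in> B \<and> (\<forall>h\<in>B. (\<lambda>x. - h x) \<in> B)"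

lemma absconv2: assumes B: "absconvex B" and x: "u \<in> B" and y: "v \<in> B" and ab: "\<bar>a\<bar> + \<bar>b\<bar> \<le> 1"
  shows "(\<lambda>z. a * u z + b * v z) \<in> B"
proof -
  have cv: "vconvex B" and z: "(\<lambda>x. 0) \<in> B" and neg: "\<forall>h\<in>B. (\<lambda>x. - h x) \<in> B"
    using B unfolding absconvex_def by auto
  define u' where "u' = (if a \<ge> 0 then u else (\<lambda>z. - u z))"
  define v' where "v' = (if b \<ge> 0 then v else (\<lambda>z. - v z))"
  have u': "u' \<in> B" and v': "v' \<in> B" using x y neg unfolding u'_def v'_def by auto
  have eq: "(\<lambda>z. a * u z + b * v z) = (\<lambda>z. \<bar>a\<bar> * u' z + \<bar>b\<bar> * v' z)"
    by (cases "a \<ge> 0"; cases "b \<ge> 0") (simp_all add: u'_def v'_def fun_eq_iff)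
  define s where "s = \<bar>a\<bar> + \<bar>b\<bar>"
  show ?thesis
  proof (cases "s = 0")
    case True
    then have "a = 0" "b = 0" unfolding s_def by auto
    then show ?thesis using z by simp
  next
    case False
    then have s0: "s > 0" unfolding s_def by auto
    have P: "(\<lambda>z. (\<bar>a\<bar> / s) * u' z + (1 - \<bar>a\<bar> / s) * v' z) \<in> B"
      by (rule convex_comb[OF cv u' v']) (use s0 in \<open>auto simp: s_def field_simps\<close>)
    have "(\<lambda>z. s * ((\<bar>a\<bar> / s) * u' z + (1 - \<bar>a\<bar> / s) * v' z) + (1 - s) * 0) \<in> B"
      by (rule convex_comb[OF cv P z]) (use s0 ab in \<open>auto simp: s_def\<close>)
    moreover have "(\<lambda>z. s * ((\<bar>a\<bar> / s) * u' z + (1 - \<bar>a\<bar> / s) * v' z) + (1 - s) * 0) = (\<lambda>z. \<bar>a\<bar> * u' z + \<bar>b\<bar> * v' z)"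
    proof (rule ext)
      fix z
      have h1: "s * (\<bar>a\<bar> / s) = \<bar>a\<bar>" using s0 by simp
      have h2: "s * (1 - \<bar>a\<bar> / s) = \<bar>b\<bar>" using s0 by (simp add: s_def right_diff_distrib)
      have "s * ((\<bar>a\<bar> / s) * u' z + (1 - \<bar>a\<bar> / s) * v' z) = (s * (\<bar>a\<bar> / s)) * u' z + (s * (1 - \<bar>a\<bar> / s)) * v' z"
        by (simp only: distrib_left mult.assoc)
      then show "s * ((\<bar>a\<bar> / s) * u' z + (1 - \<bar>a\<bar> / s) * v' z) + (1 - s) * 0 = \<bar>a\<bar> * u' z + \<bar>b\<bar> * v' z"
        using h1 h2 by simp
    qed
    ultimately show ?thesis using eq by simp
  qed
qed

lemma absconv_sum_aux: assumes B: "absconvex B" and J: "finite J" and v: "\<And>j. j \<in> J \<Longrightarrow> v j \<in> B"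
  shows "\<exists>b\<in>B. (\<lambda>x. \<Sum>j\<in>J. c j * v j x) = (\<lambda>x. (\<Sum>j\<in>J. \<bar>c j\<bar>) * b x)"
  using J v
proof (induction J rule: finite_induct)
  case empty then show ?case using B unfolding absconvex_def by auto
next
  case (insert i J)
  have "\<exists>b\<in>B. (\<lambda>x. \<Sum>j\<in>J. c j * v j x) = (\<lambda>x. (\<Sum>j\<in>J. \<bar>c j\<bar>) * b x)"
    by (rule insert.IH) (rule insert.prems, simp)
  then obtain b where b: "b \<in> B" "(\<lambda>x. \<Sum>j\<in>J. c j * v j x) = (\<lambda>x. (\<Sum>j\<in>J. \<bar>c j\<bar>) * b x)" by blast
  define \<sigma> where "\<sigma> = (\<Sum>j\<in>J. \<bar>c j\<bar>)"
  have \<sigma>0: "\<sigma> \<ge> 0" unfolding \<sigma>_def by (simp add: sum_nonneg)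
  define s where "s = \<bar>c i\<bar> + \<sigma>"
  have vi: "v i \<in> B" by (rule insert.prems) simp
  have ss: "(\<Sum>j\<in>insert i J. \<bar>c j\<bar>) = s" using insert(1,2) unfolding s_def \<sigma>_def by simp
  have sumeq: "(\<lambda>x. \<Sum>j\<in>insert i J. c j * v j x) = (\<lambda>x. c i * v i x + \<sigma> * b x)"
    using insert(1,2) b(2) unfolding \<sigma>_def by (simp add: fun_eq_iff)
  show ?case
  proof (cases "s = 0")
    case True
    then have "c i = 0" "\<sigma> = 0" using \<sigma>0 unfolding s_def by auto
    then have "(\<lambda>x. \<Sum>j\<in>insert i J. c j * v j x) = (\<lambda>x. (\<Sum>j\<in>insert i J. \<bar>c j\<bar>) * b x)"
      using sumeq ss True by simp
    then show ?thesis using b(1) by blast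
  next
    case False
    then have s0: "s > 0" using \<sigma>0 unfolding s_def by auto
    have P: "(\<lambda>z. (c i / s) * v i z + (\<sigma> / s) * b z) \<in> B"
    proof (rule absconv2[OF B vi b(1)])
      have "\<bar>c i / s\<bar> + \<bar>\<sigma> / s\<bar> = (\<bar>c i\<bar> + \<sigma>) / s" using s0 \<sigma>0 by (simp add: add_divide_distrib)
      then show "\<bar>c i / s\<bar> + \<bar>\<sigma> / s\<bar> \<le> 1" using s0 by (simp add: s_def)
    qed
    have Q: "(\<lambda>x. \<Sum>j\<in>insert i J. c j * v j x) = (\<lambda>x. (\<Sum>j\<in>insert i J. \<bar>c j\<bar>) * ((c i / s) * v i x + (\<sigma> / s) * b x))"
    proof (rule ext)
      fix x
      have h1: "s * (c i / s) = c i" "s * (\<sigma> / s) = \<sigma>" using s0 by simp_all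
      have "s * ((c i / s) * v i x + (\<sigma> / s) * b x) = (s * (c i / s)) * v i x + (s * (\<sigma> / s)) * b x"
        by (simp only: distrib_left mult.assoc)
      then show "(\<Sum>j\<in>insert i J. c j * v j x) = (\<Sum>j\<in>insert i J. \<bar>c j\<bar>) * ((c i / s) * v i x + (\<sigma> / s) * b x)"
        using h1 ss sumeq by (simp add: fun_eq_iff)
    qed
    show ?thesis
    proof (rule bexI[OF _ P])
      show "(\<lambda>x. \<Sum>j\<in>insert i J. c j * v j x) = (\<lambda>x. (\<Sum>j\<in>insert i J. \<bar>c j\<bar>) * (\<lambda>z. (c i / s) * v i z + (\<sigma> / s) * b z) x)"
        using Q by simp
    qed
  qed
qed

lemma absconv_sum: assumes B: "absconvex B" and J: "finite J" and v: "\<And>j. j \<in> J \<Longrightarrow> v j \<in> B"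
    and c: "(\<Sum>j\<in>J. \<bar>c j\<bar>) \<le> 1"
  shows "(\<lambda>x. \<Sum>j\<in>J. c j * v j x) \<in> B"
proof -
  have ex: "\<exists>b\<in>B. (\<lambda>x. \<Sum>j\<in>J. c j * v j x) = (\<lambda>x. (\<Sum>j\<in>J. \<bar>c j\<bar>) * b x)"
    by (rule absconv_sum_aux[OF B J]) (rule v)
  then obtain b where b: "b \<in> B" "(\<lambda>x. \<Sum>j\<in>J. c j * v j x) = (\<lambda>x. (\<Sum>j\<in>J. \<bar>c j\<bar>) * b x)"
    by blast
  have z: "(\<lambda>x. 0) \<in> B" using B unfolding absconvex_def by auto
  have "(\<lambda>x. (\<Sum>j\<in>J. \<bar>c j\<bar>) * b x + 0 * 0) \<in> B"
    using c by (intro absconv2[OF B b(1) z]) (auto simp: sum_nonneg)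
  then show ?thesis using b(2) by simp
qed


lemma maximal:
  assumes lc: "lc_vector_topology T'" and dc: "continuous_map (top_of_set conv_seq) T' delta"
  shows "coarser T' T0"
  unfolding coarser_def
proof (intro allI impI)
  have vt: "vector_topology T'" using lc unfolding lc_vector_topology_def by auto
  have top: "topspace T' = FV" using vt_top[OF vt] .
  have z: "vzero \<in> FV" using FV_zero by (simp add: vzero_def)
  fix U assume U: "openin T' U"
  show "openin T0 U" unfolding openin_semtop[OF gQ0] semopen_def
  proof (intro conjI ballI)
    show "U \<subseteq> FV" using openin_subset[OF U] top by simp
    fix f0 assume f0U: "f0 \<in> U"
    have f0: "f0 \<in> FV" using f0U openin_subset[OF U] top by auto
    define U' where "U' = {h \<in> topspace T'. vadd h f0 \<in> U}"
    have U'o: "openin T' U'" unfolding U'_def by (rule preimage_open[OF vt_transl[OF vt f0] U])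
    have zU': "vzero \<in> U'" unfolding U'_def using top z f0U by (simp add: vadd_eq vzero_def)
    obtain W where W: "openin T' W" "vconvex W" "vzero \<in> W" "W \<subseteq> U'"
      using lc U'o zU' unfolding lc_vector_topology_def by blast
    have WF: "W \<subseteq> FV" using openin_subset[OF W(1)] top by simp
    define B where "B = {h \<in> W. vneg h \<in> W}"
    have BU: "B \<subseteq> U'" using W(4) unfolding B_def by auto
    have Bac: "absconvex B" unfolding absconvex_def
    proof (intro conjI ballI)
      show "B \<subseteq> FV" using WF unfolding B_def by auto
      show "(\<lambda>x. 0) \<in> B" using W(3) unfolding B_def by (simp add: vzero_def vneg_eq)
      fix h assume "h \<in> B" then show "(\<lambda>x. - h x) \<in> B" unfolding B_def by (simp add: vneg_eq)
    next
      show "vconvex B" unfolding vconvex_def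
      proof (intro ballI allI impI)
        fix f g and t :: real assume f: "f \<in> B" and g: "g \<in> B" and t: "0 \<le> t \<and> t \<le> 1"
        have "vadd (smul t f) (smul (1 - t) g) \<in> W" using W(2) f g t unfolding vconvex_def B_def by auto
        moreover have "vadd (smul t (vneg f)) (smul (1 - t) (vneg g)) \<in> W"
          using W(2) f g t unfolding vconvex_def B_def by auto
        moreover have "vadd (smul t (vneg f)) (smul (1 - t) (vneg g)) = vneg (vadd (smul t f) (smul (1 - t) g))"
          by (simp add: vadd_eq smul_eq vneg_eq fun_eq_iff)
        ultimately show "vadd (smul t f) (smul (1 - t) g) \<in> B" unfolding B_def by simp
      qed
    qed
    have zB: "(\<lambda>x. 0) \<in> B" using Bac unfolding absconvex_def by auto
    have negW: "\<And>h. vneg h \<in> W \<Longrightarrow> h \<in> W \<Longrightarrow> h \<in> B" unfolding B_def by auto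
    have absorb: "\<exists>s>0. (\<lambda>x. s * e x) \<in> B" if e: "e \<in> FV" for e
    proof -
      have "openin euclideanreal {c \<in> topspace euclideanreal. smul c e \<in> W}"
        by (rule preimage_open[OF vt_line[OF vt e] W(1)])
      then have op: "open {c. smul c e \<in> W}" by simp
      have "smul 0 e \<in> W" using W(3) by (simp add: smul_eq vzero_def)
      then obtain r where r: "r > 0" "ball 0 r \<subseteq> {c. smul c e \<in> W}"
        using op open_contains_ball by blast
      have "r/2 \<in> ball 0 r" "-(r/2) \<in> ball 0 r" using r(1) by (auto simp: dist_real_def)
      then have a: "smul (r/2) e \<in> W" and b: "smul (-(r/2)) e \<in> W" using r(2) by blast+
      have "vneg (smul (r/2) e) = smul (-(r/2)) e" by (simp add: vneg_eq smul_eq fun_eq_iff)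
      then have "smul (r/2) e \<in> B" using a b negW by simp
      then show ?thesis using r by (intro exI[of _ "r/2"]) (simp add: smul_eq)
    qed
    text \<open>Tail behaviour from continuity of delta at 0.\<close>
    have tail: "\<exists>N. \<forall>n\<ge>N. (\<lambda>x. K * Ef n x) \<in> B" for K :: real
    proof -
      define b where "b = vneg (delta 0)"
      have bF: "b \<in> FV" unfolding b_def vneg_eq using FV_smul[OF delta_FV[of 0], of "-1"]
        by (simp add: conv_seq_def)
      have G: "continuous_map (top_of_set conv_seq) T' (\<lambda>x. smul a (vadd (delta x) b))" for a
      proof -
        have "continuous_map (top_of_set conv_seq) T' ((\<lambda>h. smul a h) \<circ> (\<lambda>h. vadd h b) \<circ> delta)"
          by (rule continuous_map_compose[OF dc continuous_map_compose[OF vt_transl[OF vt bF] vt_scale[OF vt]]])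
        then show ?thesis by (simp add: o_def)
      qed
      have G0: "smul a (vadd (delta 0) b) \<in> W" for a
        using W(3) by (simp add: smul_eq vadd_eq b_def vneg_eq vzero_def)
      have o1: "openin (top_of_set conv_seq) {x \<in> topspace (top_of_set conv_seq). smul a (vadd (delta x) b) \<in> W}" for a
        by (rule preimage_open[OF G W(1)])
      have c0: "0 \<in> conv_seq" by (simp add: conv_seq_def)
      have ex: "\<exists>e>0. \<forall>x'\<in>conv_seq. dist x' 0 < e \<longrightarrow> smul a (vadd (delta x') b) \<in> W" for a
      proof -
        have S0: "0 \<in> {x \<in> topspace (top_of_set conv_seq). smul a (vadd (delta x) b) \<in> W}"
          using G0[of a] c0 by simp
        have "\<forall>x\<in>{x \<in> topspace (top_of_set conv_seq). smul a (vadd (delta x) b) \<in> W}. \<exists>e>0. \<forall>x'\<in>conv_seq. dist x' x < e \<longrightarrow> x' \<in> {x \<in> topspace (top_of_set conv_seq). smul a (vadd (delta x) b) \<in> W}"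
          using o1[of a] unfolding openin_euclidean_subtopology_iff by (rule conjunct2)
        then obtain e where "e > 0" "\<forall>x'\<in>conv_seq. dist x' 0 < e \<longrightarrow> x' \<in> {x \<in> topspace (top_of_set conv_seq). smul a (vadd (delta x) b) \<in> W}"
          using S0 by blast
        then show ?thesis by auto
      qed
      obtain e1 where e1: "e1 > 0" "\<forall>x'\<in>conv_seq. dist x' 0 < e1 \<longrightarrow> smul K (vadd (delta x') b) \<in> W"
        using ex[of K] by blast
      obtain e2 where e2: "e2 > 0" "\<forall>x'\<in>conv_seq. dist x' 0 < e2 \<longrightarrow> smul (-K) (vadd (delta x') b) \<in> W"
        using ex[of "-K"] by blast
      define m where "m = min e1 e2"
      have m1: "m \<le> e1" "m \<le> e2" unfolding m_def by auto
      obtain N :: nat where N: "1 / m < real N" using reals_Archimedean2 by blast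
      show ?thesis
      proof (intro exI[of _ "N"] allI impI)
        fix n assume n: "N \<le> n"
        have mpos: "m > 0" using e1 e2 unfolding m_def by simp
        have Npos: "real N > 0" using N mpos by (smt (verit) divide_pos_pos)
        then have n1: "1 \<le> n" using n by simp
        have "1 / real n \<le> 1 / real N" using n Npos by (intro divide_left_mono) auto
        also have "\<dots> < m"
        proof -
          have "1 < real N * m" using N pos_divide_less_eq[OF mpos] by simp
          then show ?thesis using pos_divide_less_eq[OF Npos] by (simp add: mult.commute)
        qed
        finally have "1 / real n < m" .
        then have small: "dist (1 / real n) 0 < e1" "dist (1 / real n) 0 < e2" using m1 by (auto simp: dist_real_def)
        have cn: "1 / real n \<in> conv_seq" using n1 unfolding conv_seq_iff by auto
        have w1: "smul K (vadd (delta (1 / real n)) b) \<in> W" using e1(2) cn small by auto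
        have w2: "smul (-K) (vadd (delta (1 / real n)) b) \<in> W" using e2(2) cn small by auto
        have eq1: "smul K (vadd (delta (1 / real n)) b) = (\<lambda>x. K * Ef n x)"
          using n1 by (simp add: smul_eq vadd_eq b_def vneg_eq Ef_def fun_eq_iff)
        have eq2: "vneg (\<lambda>x. K * Ef n x) = smul (-K) (vadd (delta (1 / real n)) b)"
          using n1 by (simp add: smul_eq vadd_eq b_def vneg_eq Ef_def fun_eq_iff)
        show "(\<lambda>x. K * Ef n x) \<in> B" using negW w1 w2 eq1 eq2 by simp
      qed
    qed
    have "\<forall>j. \<exists>s. s > 0 \<and> (\<lambda>x. s * Ef j x) \<in> B" using absorb[OF Ef_FV] by blast
    then have "\<exists>sf. \<forall>j. sf j > 0 \<and> (\<lambda>x. sf j * Ef j x) \<in> B" by (rule choice)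
    then obtain sf where sf: "\<And>j. sf j > 0 \<and> (\<lambda>x. sf j * Ef j x) \<in> B" by blast
    have "\<forall>K::nat. \<exists>N. \<forall>n\<ge>N. (\<lambda>x. real K * Ef n x) \<in> B" using tail by blast
    then have "\<exists>Nf. \<forall>K::nat. \<forall>n\<ge>Nf K. (\<lambda>x. real K * Ef n x) \<in> B" by (rule choice)
    then obtain Nf where Nf: "\<And>K n. Nf K \<le> n \<Longrightarrow> (\<lambda>x. real K * Ef n x) \<in> B" by blast
    define SK where "SK j = {K. K \<le> j \<and> (\<lambda>x. real K * Ef j x) \<in> B}" for j
    have SKfin: "finite (SK j)" for j unfolding SK_def by auto
    have SK0: "0 \<in> SK j" for j unfolding SK_def using zB by simp
    define t where "t j = max (sf j) (real (Max (SK j)))" for j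
    have tpos: "t j > 0" for j unfolding t_def using sf[of j] by auto
    have tB: "(\<lambda>x. t j * Ef j x) \<in> B" for j
    proof (cases "sf j \<ge> real (Max (SK j))")
      case True then show ?thesis using sf[of j] unfolding t_def by simp
    next
      case False
      have "Max (SK j) \<in> SK j" using SKfin SK0 by (intro Max_in) auto
      then show ?thesis using False unfolding t_def SK_def by simp
    qed
    have tbig: "real K \<le> t j" if "max (Nf K) K \<le> j" for K j
    proof -
      have "K \<in> SK j" unfolding SK_def using that Nf[of K j] by auto
      then have "K \<le> Max (SK j)" using SKfin by auto
      then show ?thesis unfolding t_def by linarith
    qed
    define w where "w j = 1 / t j" for j
    have adm: "adm w" unfolding adm_def
    proof (intro conjI allI)
      fix n show "0 < w n" unfolding w_def using tpos[of n] by simp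
    next
      show "w \<longlonglongrightarrow> 0" unfolding lim_sequentially
      proof (intro allI impI)
        fix r :: real assume r: "r > 0"
        obtain K :: nat where K: "1 / r < real K" using reals_Archimedean2 by blast
        show "\<exists>no. \<forall>n\<ge>no. dist (w n) 0 < r"
        proof (intro exI[of _ "max (Nf K) K"] allI impI)
          fix n assume "max (Nf K) K \<le> n"
          then have tK: "real K \<le> t n" using tbig by blast
          have Kpos: "real K > 0" using K r by (smt (verit) divide_pos_pos)
          have "1 / t n \<le> 1 / real K" using tK Kpos by (intro divide_left_mono) auto
          also have "\<dots> < r" using K r Kpos by (simp add: field_simps)
          finally show "dist (w n) 0 < r" using tpos[of n] unfolding w_def by (simp add: dist_real_def)
        qed
      qed
    qed
    show "\<exists>q\<in>QQ {0}. \<forall>g\<in>FV. q (\<lambda>x. g x - f0 x) < 1 \<longrightarrow> g \<in> U"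
    proof (intro bexI[of _ "qq w 0"] ballI impI)
      show "qq w 0 \<in> QQ {0}" unfolding QQ_def using adm by blast
      fix g assume g: "g \<in> FV" "qq w 0 (\<lambda>x. g x - f0 x) < 1"
      define h where "h = (\<lambda>x. g x - f0 x)"
      have hF: "h \<in> FV" unfolding h_def using FV_diff[OF g(1) f0] .
      define J where "J = insert 0 (NS h)"
      have J: "finite J" unfolding J_def using finite_NS[OF hF] by simp
      have "h = (\<lambda>x. \<Sum>j\<in>J. Cf h j * Ef j x)" unfolding J_def by (rule decomp[OF hF])
      also have "\<dots> = (\<lambda>x. \<Sum>j\<in>J. (Cf h j / t j) * (\<lambda>y. t j * Ef j y) x)"
      proof (rule ext)
        fix x
        show "(\<Sum>j\<in>J. Cf h j * Ef j x) = (\<Sum>j\<in>J. (Cf h j / t j) * (\<lambda>y. t j * Ef j y) x)"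
        proof (intro sum.cong refl)
          fix j
          have "t j \<noteq> 0" using tpos[of j] by simp
          then show "Cf h j * Ef j x = (Cf h j / t j) * (\<lambda>y. t j * Ef j y) x" by simp
        qed
      qed
      finally have hrep: "h = (\<lambda>x. \<Sum>j\<in>J. (Cf h j / t j) * (\<lambda>y. t j * Ef j y) x)" .
      have "(\<Sum>j\<in>J. \<bar>Cf h j / t j\<bar>) = (\<Sum>j\<in>J. w j * \<bar>Cf h j\<bar>)"
        using tpos by (intro sum.cong refl) (simp add: w_def abs_div_pos)
      also have "\<dots> = Pw w h" unfolding J_def Pw_def ..
      also have "\<dots> < 1" using g(2) unfolding qq_def h_def by simp
      finally have csum: "(\<Sum>j\<in>J. \<bar>Cf h j / t j\<bar>) \<le> 1" by simp
      have "(\<lambda>x. \<Sum>j\<in>J. (Cf h j / t j) * (\<lambda>y. t j * Ef j y) x) \<in> B"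
        by (rule absconv_sum[OF Bac J _ csum]) (rule tB)
      then have "h \<in> B" using hrep by simp
      then have "h \<in> U'" using BU by auto
      then have "vadd h f0 \<in> U" unfolding U'_def by auto
      moreover have "vadd h f0 = g" unfolding h_def by (simp add: vadd_eq)
      ultimately show "g \<in> U" by simp
    qed
  qed
qed


lemma phi_decomp: assumes phi: "linear_on_FV \<phi>" and f: "f \<in> FV"
  shows "\<phi> f = (\<Sum>j\<in>insert 0 (NS f). Cf f j * \<phi> (Ef j))"
proof -
  have "\<phi> f = \<phi> (\<lambda>x. \<Sum>j\<in>insert 0 (NS f). Cf f j * Ef j x)" using decomp[OF f] by simp
  also have "\<dots> = (\<Sum>j\<in>insert 0 (NS f). Cf f j * \<phi> (Ef j))"
    by (rule linear_on_FV_sum[OF phi]) (use finite_NS[OF f] Ef_FV in auto)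
  finally show ?thesis .
qed

lemma coeff_null:
  assumes phi: "linear_on_FV \<phi>" and w: "adm w" and l: "0 \<le> l"
    and bound: "\<forall>f\<in>FV. \<bar>\<phi> f\<bar> \<le> qq w l f"
  shows "(\<lambda>n. \<phi> (Ef n)) \<longlonglongrightarrow> 0"
proof (rule ccontr)
  define a where "a n = \<phi> (Ef n)" for n
  assume "\<not> (\<lambda>n. \<phi> (Ef n)) \<longlonglongrightarrow> 0"
  then have "\<not> (\<forall>r>0. \<exists>no. \<forall>n\<ge>no. dist (a n) 0 < r)" unfolding a_def lim_sequentially by simp
  then obtain \<epsilon> where \<epsilon>: "\<epsilon> > 0" "\<forall>no. \<exists>n\<ge>no. \<not> dist (a n) 0 < \<epsilon>" by blast
  have "w \<longlonglongrightarrow> 0" using w unfolding adm_def by simp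
  then obtain N0 where N0: "\<forall>n\<ge>N0. dist (w n) 0 < \<epsilon> / 2"
    unfolding lim_sequentially using \<epsilon>(1) by (meson half_gt_zero)
  define A where "A \<sigma> = {n. 1 \<le> n \<and> N0 \<le> n \<and> \<epsilon> \<le> \<sigma> * a n}" for \<sigma> :: real
  have inf: "infinite {n. 1 \<le> n \<and> N0 \<le> n \<and> \<epsilon> \<le> \<bar>a n\<bar>}"
    unfolding infinite_nat_iff_unbounded_le
  proof
    fix m
    obtain n where "n \<ge> max m (max N0 1)" "\<not> dist (a n) 0 < \<epsilon>" using \<epsilon>(2) by blast
    then show "\<exists>n\<ge>m. n \<in> {n. 1 \<le> n \<and> N0 \<le> n \<and> \<epsilon> \<le> \<bar>a n\<bar>}" by (auto simp: dist_real_def)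
  qed
  have "{n. 1 \<le> n \<and> N0 \<le> n \<and> \<epsilon> \<le> \<bar>a n\<bar>} \<subseteq> A 1 \<union> A (-1)"
    unfolding A_def by (auto simp: abs_if split: if_splits)
  then have "infinite (A 1) \<or> infinite (A (-1))" using inf finite_subset by blast
  then obtain \<sigma> where \<sigma>: "\<bar>\<sigma>\<bar> = 1" "infinite (A \<sigma>)" by (metis abs_minus_cancel abs_one)
  obtain k :: nat where k: "2 * l / \<epsilon> < real k" using reals_Archimedean2 by blast
  have kpos: "real k > 0" using k l \<epsilon>(1) by (smt (verit) divide_nonneg_pos)
  obtain Bs where Bs: "finite Bs" "card Bs = k" "Bs \<subseteq> A \<sigma>" using infinite_arbitrarily_large[OF \<sigma>(2)] by blast
  have B0: "0 \<notin> Bs" using Bs(3) unfolding A_def by auto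
  have Bne: "Bs \<noteq> {}" using Bs kpos by auto
  define v where "v = (\<lambda>x. \<Sum>j\<in>Bs. (1 / real k) * Ef j x)"
  have vF: "v \<in> FV" unfolding v_def by (rule comb_FV[OF Bs(1)])
  have phiv: "\<phi> v = (\<Sum>j\<in>Bs. (1 / real k) * a j)"
    unfolding v_def a_def by (rule linear_on_FV_sum[OF phi Bs(1)]) (rule Ef_FV)
  have "\<epsilon> = (\<Sum>j\<in>Bs. (1 / real k) * \<epsilon>)" using Bs(2) kpos by simp
  also have "\<dots> \<le> (\<Sum>j\<in>Bs. (1 / real k) * (\<sigma> * a j))"
    using Bs(3) kpos by (intro sum_mono mult_left_mono) (auto simp: A_def)
  also have "\<dots> = \<sigma> * \<phi> v" unfolding phiv by (simp add: sum_distrib_left algebra_simps)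
  also have "\<dots> \<le> \<bar>\<phi> v\<bar>" using \<sigma>(1) by (simp add: abs_if split: if_splits)
  finally have lower: "\<epsilon> \<le> \<bar>\<phi> v\<bar>" .
  have "Pw w v = (\<Sum>j\<in>Bs. w j * \<bar>1 / real k\<bar>)" unfolding v_def by (rule comb_Pw[OF Bs(1) B0])
  also have "\<dots> < (\<Sum>j\<in>Bs. (\<epsilon> / 2) * (1 / real k))"
  proof (rule sum_strict_mono[OF Bs(1) Bne])
    fix j assume "j \<in> Bs"
    then have "N0 \<le> j" using Bs(3) unfolding A_def by auto
    then have "w j < \<epsilon> / 2" using N0 w unfolding adm_def by (auto simp: dist_real_def)
    moreover have "(1 / real k) > 0" using kpos by simp
    ultimately have "w j * (1 / real k) < (\<epsilon> / 2) * (1 / real k)" by (rule mult_strict_right_mono)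
    then show "w j * \<bar>1 / real k\<bar> < (\<epsilon> / 2) * (1 / real k)" using kpos by simp
  qed
  also have "\<dots> = \<epsilon> / 2" using Bs(2) kpos by simp
  finally have P: "Pw w v < \<epsilon> / 2" .
  have "Mx v \<le> 1 / real k" unfolding v_def by (rule comb_Mx[OF Bs(1)]) (use kpos in auto)
  then have "l * Mx v \<le> l * (1 / real k)" using l by (rule mult_left_mono)
  also have "\<dots> < \<epsilon> / 2"
  proof -
    have "2 * l < \<epsilon> * real k" using k \<epsilon>(1) by (simp add: pos_divide_less_eq mult.commute)
    then show ?thesis using kpos by (simp add: field_simps)
  qed
  finally have "qq w l v < \<epsilon>" using P unfolding qq_def by linarith
  then show False using lower bound vF by fastforce
qed

lemma dual_reduce:
  assumes phi: "linear_on_FV \<phi>" and w: "adm w" and l: "0 \<le> l"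
    and bound: "\<forall>f\<in>FV. \<bar>\<phi> f\<bar> \<le> qq w l f"
  shows "\<exists>w'. adm w' \<and> (\<forall>f\<in>FV. \<bar>\<phi> f\<bar> \<le> qq w' 0 f)"
proof -
  define w' where "w' j = \<bar>\<phi> (Ef j)\<bar> + 1 / (real j + 1)" for j
  have "adm w'" unfolding adm_def
  proof (intro conjI allI)
    fix n show "0 < w' n" unfolding w'_def by (simp add: add_nonneg_pos)
  next
    have "(\<lambda>n. \<bar>\<phi> (Ef n)\<bar>) \<longlonglongrightarrow> 0" using tendsto_rabs_zero[OF coeff_null[OF assms]] .
    moreover have "(\<lambda>n. 1 / (real n + 1)) \<longlonglongrightarrow> 0" using adm_one unfolding adm_def by simp
    ultimately show "w' \<longlonglongrightarrow> 0" unfolding w'_def using tendsto_add[of _ 0 _ _ 0] by fastforce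
  qed
  moreover have "\<forall>f\<in>FV. \<bar>\<phi> f\<bar> \<le> qq w' 0 f"
  proof
    fix f assume f: "f \<in> FV"
    have "\<bar>\<phi> f\<bar> = \<bar>\<Sum>j\<in>insert 0 (NS f). Cf f j * \<phi> (Ef j)\<bar>" using phi_decomp[OF phi f] by simp
    also have "\<dots> \<le> (\<Sum>j\<in>insert 0 (NS f). \<bar>Cf f j * \<phi> (Ef j)\<bar>)" by (rule sum_abs)
    also have "\<dots> \<le> (\<Sum>j\<in>insert 0 (NS f). w' j * \<bar>Cf f j\<bar>)"
    proof (intro sum_mono)
      fix j
      have "\<bar>\<phi> (Ef j)\<bar> \<le> w' j" unfolding w'_def by simp
      then have "\<bar>Cf f j\<bar> * \<bar>\<phi> (Ef j)\<bar> \<le> \<bar>Cf f j\<bar> * w' j" by (simp add: mult_left_mono)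
      then show "\<bar>Cf f j * \<phi> (Ef j)\<bar> \<le> w' j * \<bar>Cf f j\<bar>" by (simp add: abs_mult mult.commute)
    qed
    also have "\<dots> = qq w' 0 f" unfolding qq_def Pw_def by simp
    finally show "\<bar>\<phi> f\<bar> \<le> qq w' 0 f" .
  qed
  ultimately show ?thesis by blast
qed


lemma cis_inj: assumes "cis a = cis b" "\<bar>a - b\<bar> < 2 * pi" shows "a = b"
proof -
  have "exp (\<i> * complex_of_real a) = exp (\<i> * complex_of_real b)"
    using assms(1) by (simp add: cis_conv_exp)
  then obtain n :: int where n: "\<i> * complex_of_real a = \<i> * complex_of_real b + complex_of_real (real_of_int (2 * n) * pi) * \<i>"
    unfolding exp_eq by blast
  have "a = b + real_of_int (2 * n) * pi" using arg_cong[OF n, of Im] by simp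
  then have "\<bar>real_of_int n\<bar> * (2 * pi) < 2 * pi" using assms(2) by (simp add: abs_mult)
  then have "\<bar>real_of_int n\<bar> < 1" using pi_gt_zero by simp
  then have "n = 0" by linarith
  then show ?thesis using \<open>a = b + real_of_int (2 * n) * pi\<close> by simp
qed

lemma cis_Arg1: "cmod z = 1 \<Longrightarrow> cis (Arg z) = z"
proof -
  assume a: "cmod z = 1"
  then have "z \<noteq> 0" by auto
  then show ?thesis using cis_Arg[of z] a by (simp add: sgn_div_norm)
qed

lemma cauchy_lin:
  fixes h :: "real \<Rightarrow> real"
  assumes add: "\<And>a b. h (a + b) = h a + h b" and d: "\<delta> > 0" and M: "\<And>c. \<bar>c\<bar> < \<delta> \<Longrightarrow> \<bar>h c\<bar> \<le> M"
  shows "h c = c * h 1"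
proof -
  define D where "D x = h x - x * h 1" for x
  have Dadd: "D (a + b) = D a + D b" for a b unfolding D_def using add[of a b] by (simp add: algebra_simps)
  have "h 0 = h 0 + h 0" using add[of 0 0] unfolding add_0_left .
  then have "h 0 = 0" by linarith
  then have D0: "D 0 = 0" unfolding D_def by simp
  have Dneg: "D (- a) = - D a" for a
  proof -
    have "D (a + - a) = D a + D (- a)" by (rule Dadd)
    then show ?thesis using D0 by simp
  qed
  have D1: "D 1 = 0" unfolding D_def by simp
  have Dnat: "D (real n * x) = real n * D x" for n x
  proof (induction n)
    case 0 show ?case using D0 by simp
  next
    case (Suc n)
    have e: "real (Suc n) * x = real n * x + x" by (simp add: algebra_simps)
    have "D (real n * x + x) = D (real n * x) + D x" by (rule Dadd)
    then show ?case unfolding e using Suc.IH by (simp add: algebra_simps)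
  qed
  have Dint: "D (real_of_int z) = 0" for z
  proof (cases "z \<ge> 0")
    case True
    then have e: "real_of_int z = real (nat z) * 1" by simp
    have "D (real_of_int z) = D (real (nat z) * 1)" by (simp only: e)
    also have "\<dots> = real (nat z) * D 1" by (rule Dnat)
    finally show ?thesis using D1 by simp
  next
    case False
    then have e: "real_of_int z = - (real (nat (- z)) * 1)" by simp
    have "D (real_of_int z) = D (- (real (nat (- z)) * 1))" by (simp only: e)
    also have "\<dots> = - D (real (nat (- z)) * 1)" by (rule Dneg)
    also have "D (real (nat (- z)) * 1) = real (nat (- z)) * D 1" by (rule Dnat)
    finally show ?thesis using D1 by simp
  qed
  define M' where "M' = M + \<delta> * \<bar>h 1\<bar>"
  have Dsmall: "\<bar>D x\<bar> \<le> M'" if "\<bar>x\<bar> < \<delta>" for x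
  proof -
    have "\<bar>D x\<bar> \<le> \<bar>h x\<bar> + \<bar>x\<bar> * \<bar>h 1\<bar>" unfolding D_def using abs_triangle_ineq4[of "h x" "x * h 1"] by (simp add: abs_mult)
    also have "\<dots> \<le> M + \<delta> * \<bar>h 1\<bar>" using M[OF that] that by (intro add_mono mult_right_mono) auto
    finally show ?thesis unfolding M'_def .
  qed
  obtain m :: nat where m: "1 / \<delta> < real m" using reals_Archimedean2 by blast
  have mpos: "real m > 0" using m d by (smt (verit) divide_pos_pos)
  have Dunit: "\<bar>D y\<bar> \<le> real m * M'" if "0 \<le> y" "y \<le> 1" for y
  proof -
    have "\<bar>y / real m\<bar> \<le> 1 / real m" using that mpos by (simp add: divide_right_mono)
    also have "1 / real m < \<delta>" using m d mpos by (simp add: field_simps)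
    finally have "\<bar>D (y / real m)\<bar> \<le> M'" by (rule Dsmall)
    moreover have "D y = real m * D (y / real m)" using Dnat[of m "y / real m"] mpos by simp
    ultimately show ?thesis using mpos by (simp add: abs_mult mult_left_mono)
  qed
  define B where "B = real m * M'"
  have Dbound: "real n * \<bar>D c\<bar> \<le> B" for n
  proof -
    define z where "z = \<lfloor>real n * c\<rfloor>"
    have "D ((real n * c - real_of_int z) + real_of_int z) = D (real n * c - real_of_int z) + D (real_of_int z)"
      by (rule Dadd)
    then have "D (real n * c) = D (real n * c - real_of_int z)" using Dint[of z] by simp
    moreover have "real_of_int z \<le> real n * c" unfolding z_def by (rule of_int_floor_le)
    moreover have "real n * c < real_of_int z + 1" unfolding z_def by (rule real_of_int_floor_add_one_gt)
    ultimately have "D (real n * c) = D (real n * c - real_of_int z)" "0 \<le> real n * c - real_of_int z" "real n * c - real_of_int z \<le> 1"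
      by linarith+
    then have "\<bar>D (real n * c)\<bar> \<le> B" unfolding B_def using Dunit by simp
    then show ?thesis using Dnat[of n c] by (simp add: abs_mult)
  qed
  have "D c = 0"
  proof (rule ccontr)
    assume ne: "D c \<noteq> 0"
    obtain n :: nat where n: "B / \<bar>D c\<bar> < real n" using reals_Archimedean2 by blast
    then have "B < real n * \<bar>D c\<bar>" using ne by (simp add: field_simps)
    then show False using Dbound[of n] by simp
  qed
  then show ?thesis unfolding D_def by simp
qed


lemma FV_div: "f \<in> FV \<Longrightarrow> (\<lambda>x. f x / c) \<in> FV"
  using FV_smul[of f "1 / c"] by simp

lemma sn_div: assumes "seminormFV q" "f \<in> FV" "c > 0" shows "q (\<lambda>x. f x / c) = q f / c"
proof -
  have "q (\<lambda>x. (1 / c) * f x) = \<bar>1 / c\<bar> * q f" by (rule sn_smul[OF assms(1,2)])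
  moreover have "(\<lambda>x. (1 / c) * f x) = (\<lambda>x. f x / c)" by simp
  ultimately show ?thesis using assms(3) by simp
qed

context
  fixes ch :: "fvec \<Rightarrow> complex" and q :: "fvec \<Rightarrow> real"
  assumes hom: "\<And>f g. f \<in> FV \<Longrightarrow> g \<in> FV \<Longrightarrow> ch (\<lambda>x. f x + g x) = ch f * ch g"
    and circ: "\<And>f. f \<in> FV \<Longrightarrow> cmod (ch f) = 1"
    and sn: "seminormFV q"
    and small: "\<And>g. g \<in> FV \<Longrightarrow> q g < 1 \<Longrightarrow> 0 < Re (ch g)"
begin

lemma L_cis: "f \<in> FV \<Longrightarrow> ch f = cis (Arg (ch f))"
  using cis_Arg1[OF circ] by simp

lemma L_small: "f \<in> FV \<Longrightarrow> q f < 1 \<Longrightarrow> \<bar>Arg (ch f)\<bar> < pi / 2"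
  using Arg_Re_pos small by blast

lemma L_add: assumes f: "f \<in> FV" and g: "g \<in> FV" and lt: "q f + q g < 1"
  shows "Arg (ch (\<lambda>x. f x + g x)) = Arg (ch f) + Arg (ch g)"
proof (rule cis_inj)
  have fg: "(\<lambda>x. f x + g x) \<in> FV" using FV_add[OF f g] .
  have q0: "0 \<le> q f" "0 \<le> q g" using sn_nonneg[OF sn] f g by auto
  have "q (\<lambda>x. f x + g x) \<le> q f + q g" by (rule sn_add[OF sn f g])
  then have a: "\<bar>Arg (ch (\<lambda>x. f x + g x))\<bar> < pi / 2" using L_small[OF fg] lt by linarith
  have b: "\<bar>Arg (ch f)\<bar> < pi / 2" "\<bar>Arg (ch g)\<bar> < pi / 2" using L_small f g q0 lt by (auto)
  show "\<bar>Arg (ch (\<lambda>x. f x + g x)) - (Arg (ch f) + Arg (ch g))\<bar> < 2 * pi" using a b by linarith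
  have "cis (Arg (ch (\<lambda>x. f x + g x))) = ch (\<lambda>x. f x + g x)" using L_cis[OF fg] by simp
  also have "\<dots> = ch f * ch g" by (rule hom[OF f g])
  also have "\<dots> = cis (Arg (ch f)) * cis (Arg (ch g))" using L_cis[OF f] L_cis[OF g] by simp
  also have "\<dots> = cis (Arg (ch f) + Arg (ch g))" by (rule cis_mult)
  finally show "cis (Arg (ch (\<lambda>x. f x + g x))) = cis (Arg (ch f) + Arg (ch g))" .
qed

definition Hk :: "nat \<Rightarrow> fvec \<Rightarrow> real" where
  "Hk k f = 2 ^ k * Arg (ch (\<lambda>x. f x / 2 ^ k))"

lemma H_step: assumes f: "f \<in> FV" and lt: "q f < 2 ^ k" shows "Hk (Suc k) f = Hk k f"
proof -
  define h where "h = (\<lambda>x. f x / 2 ^ Suc k)"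
  have hF: "h \<in> FV" unfolding h_def by (rule FV_div[OF f])
  have qh: "q h = q f / 2 ^ Suc k" unfolding h_def by (rule sn_div[OF sn f]) simp
  have "q h < 1 / 2" unfolding qh using lt by (simp add: field_simps)
  then have "q h + q h < 1" by linarith
  then have "Arg (ch (\<lambda>x. h x + h x)) = Arg (ch h) + Arg (ch h)" by (rule L_add[OF hF hF])
  moreover have "(\<lambda>x. h x + h x) = (\<lambda>x. f x / 2 ^ k)" unfolding h_def by (auto simp: fun_eq_iff field_simps)
  ultimately have "Arg (ch (\<lambda>x. f x / 2 ^ k)) = 2 * Arg (ch h)" by simp
  then show ?thesis unfolding Hk_def h_def by simp
qed

lemma H_stable: assumes f: "f \<in> FV" and lt: "q f < 2 ^ k" and kj: "k \<le> j" shows "Hk j f = Hk k f"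
  using kj
proof (induction j rule: dec_induct)
  case base then show ?case by simp
next
  case (step j)
  have "(2::real) ^ k \<le> 2 ^ j" using step(1) by (intro power_increasing) auto
  then have "q f < 2 ^ j" using lt by linarith
  then show ?case using H_step[OF f] step by simp
qed

definition phiK :: "fvec \<Rightarrow> real" where
  "phiK f = Hk (SOME k. q f < 2 ^ k) f"

lemma exK: "\<exists>k. q f < 2 ^ k"
  using real_arch_pow[of 2 "q f"] by auto

lemma phi_eq: assumes f: "f \<in> FV" and lt: "q f < 2 ^ k" shows "phiK f = Hk k f"
proof -
  define k0 where "k0 = (SOME k. q f < 2 ^ k)"
  have k0: "q f < 2 ^ k0" unfolding k0_def using someI_ex[OF exK] .
  have "Hk (max k k0) f = Hk k f" by (rule H_stable[OF f lt]) simp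
  moreover have "Hk (max k k0) f = Hk k0 f" by (rule H_stable[OF f k0]) simp
  ultimately show ?thesis unfolding phiK_def k0_def[symmetric] by simp
qed

lemma phi_add: assumes f: "f \<in> FV" and g: "g \<in> FV" shows "phiK (\<lambda>x. f x + g x) = phiK f + phiK g"
proof -
  obtain k where k: "q f + q g < 2 ^ k" using exK[of "\<lambda>x. 0"] real_arch_pow[of 2 "q f + q g"] by auto
  have q0: "0 \<le> q f" "0 \<le> q g" using sn_nonneg[OF sn] f g by auto
  have fg: "(\<lambda>x. f x + g x) \<in> FV" using FV_add[OF f g] .
  have "q (\<lambda>x. f x + g x) \<le> q f + q g" by (rule sn_add[OF sn f g])
  then have e1: "phiK (\<lambda>x. f x + g x) = Hk k (\<lambda>x. f x + g x)" using phi_eq[OF fg] k by simp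
  have e2: "phiK f = Hk k f" using phi_eq[OF f] k q0 by simp
  have e3: "phiK g = Hk k g" using phi_eq[OF g] k q0 by simp
  have fk: "(\<lambda>x. f x / 2 ^ k) \<in> FV" "(\<lambda>x. g x / 2 ^ k) \<in> FV" using FV_div f g by auto
  have "q (\<lambda>x. f x / 2 ^ k) + q (\<lambda>x. g x / 2 ^ k) = (q f + q g) / 2 ^ k"
    using sn_div[OF sn f] sn_div[OF sn g] by (simp add: add_divide_distrib)
  also have "\<dots> < 1" using k by simp
  finally have "Arg (ch (\<lambda>x. f x / 2 ^ k + g x / 2 ^ k)) = Arg (ch (\<lambda>x. f x / 2 ^ k)) + Arg (ch (\<lambda>x. g x / 2 ^ k))"
    by (rule L_add[OF fk])
  moreover have "(\<lambda>x. f x / 2 ^ k + g x / 2 ^ k) = (\<lambda>x. (f x + g x) / 2 ^ k)" by (simp add: add_divide_distrib)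
  ultimately have "Hk k (\<lambda>x. f x + g x) = Hk k f + Hk k g" unfolding Hk_def by (simp add: distrib_left)
  then show ?thesis using e1 e2 e3 by simp
qed

lemma chi_pow: assumes h: "h \<in> FV" shows "ch (\<lambda>x. 2 ^ j * h x) = ch h ^ (2 ^ j)"
proof (induction j)
  case 0 then show ?case by simp
next
  case (Suc j)
  have hj: "(\<lambda>x. 2 ^ j * h x) \<in> FV" using FV_smul[OF h] .
  have "(\<lambda>x. 2 ^ Suc j * h x) = (\<lambda>x. 2 ^ j * h x + 2 ^ j * h x)" by (simp add: fun_eq_iff)
  then have "ch (\<lambda>x. 2 ^ Suc j * h x) = ch (\<lambda>x. 2 ^ j * h x) * ch (\<lambda>x. 2 ^ j * h x)"
    using hom[OF hj hj] by simp
  also have "\<dots> = ch h ^ (2 ^ j) * ch h ^ (2 ^ j)" using Suc.IH by simp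
  also have "\<dots> = ch h ^ (2 ^ Suc j)" by (simp add: power_add[symmetric] mult_2)
  finally show ?case .
qed

lemma chi_phi: assumes f: "f \<in> FV" shows "ch f = cis (phiK f)"
proof -
  obtain k where k: "q f < 2 ^ k" using exK by blast
  define h where "h = (\<lambda>x. f x / 2 ^ k)"
  have hF: "h \<in> FV" unfolding h_def by (rule FV_div[OF f])
  have "f = (\<lambda>x. 2 ^ k * h x)" unfolding h_def by simp
  then have "ch f = ch h ^ (2 ^ k)" using chi_pow[OF hF, of k] by simp
  also have "\<dots> = cis (Arg (ch h)) ^ (2 ^ k)" using L_cis[OF hF] by simp
  also have "\<dots> = cis (real (2 ^ k) * Arg (ch h))" by (rule Complex.DeMoivre)
  also have "\<dots> = cis (Hk k f)" unfolding Hk_def h_def by simp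
  also have "\<dots> = cis (phiK f)" using phi_eq[OF f k] by simp
  finally show ?thesis .
qed

lemma phi_small: assumes f: "f \<in> FV" and lt: "q f < 1" shows "\<bar>phiK f\<bar> < pi / 2"
proof -
  have "phiK f = Hk 0 f" using phi_eq[OF f, of 0] lt by simp
  also have "\<dots> = Arg (ch f)" unfolding Hk_def by simp
  finally show ?thesis using L_small[OF f lt] by simp
qed

lemma phi_hom: assumes f: "f \<in> FV" shows "phiK (\<lambda>x. c * f x) = c * phiK f"
proof -
  define h where "h c = phiK (\<lambda>x. c * f x)" for c
  have hadd: "h (a + b) = h a + h b" for a b
  proof -
    have "(\<lambda>x. (a + b) * f x) = (\<lambda>x. a * f x + b * f x)" by (simp add: fun_eq_iff distrib_right)
    then show ?thesis unfolding h_def using phi_add[OF FV_smul[OF f] FV_smul[OF f]] by simp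
  qed
  have q0: "0 \<le> q f" using sn_nonneg[OF sn f] .
  define \<delta> where "\<delta> = 1 / (q f + 1)"
  have d0: "\<delta> > 0" unfolding \<delta>_def using q0 by simp
  have hb: "\<bar>h c\<bar> \<le> pi / 2" if "\<bar>c\<bar> < \<delta>" for c
  proof -
    have "q (\<lambda>x. c * f x) = \<bar>c\<bar> * q f" by (rule sn_smul[OF sn f])
    also have "\<dots> \<le> \<delta> * q f" using that q0 by (intro mult_right_mono) auto
    also have "\<dots> < 1" unfolding \<delta>_def using q0 by (simp add: field_simps)
    finally have "\<bar>phiK (\<lambda>x. c * f x)\<bar> < pi / 2" by (rule phi_small[OF FV_smul[OF f]])
    then show ?thesis unfolding h_def by simp
  qed
  have "h c = c * h 1" by (rule cauchy_lin[OF hadd d0 hb])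
  then show ?thesis unfolding h_def by simp
qed

lemma phi_linear: "linear_on_FV phiK"
proof (rule linear_on_FVI)
  fix f g a b assume f: "f \<in> FV" and g: "g \<in> FV"
  have "phiK (\<lambda>x. a * f x + b * g x) = phiK (\<lambda>x. a * f x) + phiK (\<lambda>x. b * g x)"
    by (rule phi_add[OF FV_smul[OF f] FV_smul[OF g]])
  then show "phiK (\<lambda>x. a * f x + b * g x) = a * phiK f + b * phiK g"
    using phi_hom[OF f] phi_hom[OF g] by simp
qed

lemma phi_bound: "\<forall>f\<in>FV. \<bar>phiK f\<bar> \<le> pi / 2 * q f"
  by (rule scale_bound[OF phi_linear sn]) (use phi_small in auto)

lemma lift_exists: "\<exists>\<phi>. linear_on_FV \<phi> \<and> (\<forall>f\<in>FV. \<bar>\<phi> f\<bar> \<le> pi / 2 * q f) \<and> (\<forall>f\<in>FV. ch f = cis (\<phi> f))"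
  using phi_linear phi_bound chi_phi by blast

end


lemma free_T0: "free_lc_topology T0"
  unfolding free_lc_topology_def
  using semtop_lc[OF gQ0] delta_cont maximal by blast

lemma free_unique: assumes "free_lc_topology T" shows "T = T0"
proof -
  have a: "coarser T T0" using assms maximal unfolding free_lc_topology_def by blast
  have b: "coarser T0 T" using assms free_T0 unfolding free_lc_topology_def by blast
  show ?thesis using a b unfolding coarser_def topology_eq by blast
qed

lemma QQ_sub: "QQ {0} \<subseteq> QQ {l. 0 \<le> l}"
  unfolding QQ_def by auto

lemma T0_coarser_nu: "coarser T0 Tnu"
  by (rule semtop_coarser[OF gQ0 gQ1]) (use QQ_sub in blast)

lemma top_eq: "topspace T0 = topspace Tnu"
  using topspace_semtop[OF gQ0] topspace_semtop[OF gQ1] by simp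

lemma adm_ev: assumes "adm w" shows "\<exists>n. 1 \<le> n \<and> w n < 1"
proof -
  have "w \<longlonglongrightarrow> 0" using assms unfolding adm_def by simp
  then obtain N where N: "\<forall>n\<ge>N. dist (w n) 0 < 1" unfolding lim_sequentially by (meson zero_less_one)
  then have "\<bar>w (max N 1)\<bar> < 1" by (simp add: dist_real_def)
  then show ?thesis by (intro exI[of _ "max N 1"]) auto
qed

lemma not_coarser: "\<not> coarser Tnu T0"
proof
  assume c: "coarser Tnu T0"
  define w1 where "w1 = (\<lambda>n::nat. 1 / (real n + 1))"
  have w1: "adm w1" unfolding w1_def by (rule adm_one)
  have q1: "qq w1 1 \<in> QQ {l. 0 \<le> l}" unfolding QQ_def using w1 by force
  have d0: "delta 0 \<in> FV" using delta_FV by (simp add: conv_seq_def)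
  define U where "U = sball (qq w1 1) (delta 0) 1"
  have "openin Tnu U" unfolding U_def by (rule sball_open[OF gQ1 q1 d0])
  then have U0: "openin T0 U" using c unfolding coarser_def by blast
  have dU: "delta 0 \<in> U" unfolding U_def by (rule sball_center[OF qq_sn[OF w1] d0]) auto
  obtain q where q: "q \<in> QQ {0}" "\<forall>g\<in>FV. q (\<lambda>x. g x - delta 0 x) < 1 \<longrightarrow> g \<in> U"
    using semopenD[OF gQ0 U0 dU] by blast
  then obtain w where w: "q = qq w 0" "adm w" unfolding QQ_def by auto
  obtain n where n: "1 \<le> n" "w n < 1" using adm_ev[OF w(2)] by blast
  have ef: "(\<lambda>x. delta (1 / real n) x - delta 0 x) = Ef n" using n(1) by (simp add: Ef_def)
  have dn: "delta (1 / real n) \<in> FV" using delta_FV n(1) unfolding conv_seq_iff by auto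
  have "q (\<lambda>x. delta (1 / real n) x - delta 0 x) < 1" unfolding ef w(1) qq_def using Pw_Ef[OF n(1)] n(2) by simp
  then have "delta (1 / real n) \<in> U" using q(2) dn by blast
  then have "qq w1 1 (\<lambda>x. delta (1 / real n) x - delta 0 x) < 1" unfolding U_def sball_def by simp
  then have "qq w1 1 (Ef n) < 1" using ef by simp
  moreover have "qq w1 1 (Ef n) = w1 n + 1" unfolding qq_def using Pw_Ef[OF n(1)] Mx_Ef[OF n(1)] by simp
  moreover have "w1 n > 0" using w1 unfolding adm_def by simp
  ultimately show False by simp
qed

lemma dual_eq: "lc_dual Tnu = lc_dual T0"
proof
  show "lc_dual T0 \<subseteq> lc_dual Tnu" using finer_dual(1)[OF T0_coarser_nu top_eq] .
  show "lc_dual Tnu \<subseteq> lc_dual T0"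
  proof
    fix \<phi> assume "\<phi> \<in> lc_dual Tnu"
    then have lin: "linear_on_FV \<phi>" and c: "continuous_map Tnu euclideanreal \<phi>" and z: "\<forall>x. x \<notin> FV \<longrightarrow> \<phi> x = 0"
      unfolding lc_dual_def by auto
    obtain q where q: "q \<in> QQ {l. 0 \<le> l}" "\<forall>f\<in>FV. \<bar>\<phi> f\<bar> \<le> q f" using cont_dominated[OF gQ1 lin c] by blast
    then obtain w l where wl: "q = qq w l" "adm w" "0 \<le> l" unfolding QQ_def by auto
    obtain w' where w': "adm w'" "\<forall>f\<in>FV. \<bar>\<phi> f\<bar> \<le> qq w' 0 f"
      using dual_reduce[OF lin wl(2) wl(3)] q(2) wl(1) by blast
    have "qq w' 0 \<in> QQ {0}" unfolding QQ_def using w'(1) by blast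
    then have "continuous_map T0 euclideanreal \<phi>" using dominated_cont[OF gQ0 lin _ w'(2)] by blast
    then show "\<phi> \<in> lc_dual T0" unfolding lc_dual_def using lin z by auto
  qed
qed

lemma char_eq: "characters Tnu = characters T0"
proof
  show "characters T0 \<subseteq> characters Tnu" using finer_dual(2)[OF T0_coarser_nu top_eq] .
  show "characters Tnu \<subseteq> characters T0"
  proof
    fix ch assume chn: "ch \<in> characters Tnu"
    have circ: "\<And>f. f \<in> FV \<Longrightarrow> cmod (ch f) = 1" using chn unfolding characters_def circle_def by auto
    have homv: "\<And>f g. f \<in> FV \<Longrightarrow> g \<in> FV \<Longrightarrow> ch (vadd f g) = ch f * ch g"
      using chn unfolding characters_def by auto
    have hom: "\<And>f g. f \<in> FV \<Longrightarrow> g \<in> FV \<Longrightarrow> ch (\<lambda>x. f x + g x) = ch f * ch g"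
      using homv by (simp add: vadd_eq)
    have cont: "continuous_map Tnu euclidean ch" using chn unfolding characters_def by auto
    have ext: "\<forall>x. x \<notin> FV \<longrightarrow> ch x = 1" using chn unfolding characters_def by auto
    have z: "vzero \<in> FV" using FV_zero by (simp add: vzero_def)
    have "ch vzero = ch vzero * ch vzero" using hom[OF z z] by (simp add: vzero_def)
    moreover have "ch vzero \<noteq> 0" using circ[OF z] by auto
    ultimately have ch0: "ch vzero = 1" by simp
    have "openin (euclidean :: complex topology) {z. 0 < Re z}" using open_halfspace_Re_gt[of 0] by simp
    then have op: "openin Tnu {x \<in> topspace Tnu. ch x \<in> {z. 0 < Re z}}" by (rule preimage_open[OF cont])
    have "vzero \<in> {x \<in> topspace Tnu. ch x \<in> {z. 0 < Re z}}" using ch0 z topspace_semtop[OF gQ1] by simp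
    then obtain q where q: "q \<in> QQ {l. 0 \<le> l}" "\<forall>g\<in>FV. q (\<lambda>x. g x - vzero x) < 1 \<longrightarrow> g \<in> {x \<in> topspace Tnu. ch x \<in> {z. 0 < Re z}}"
      using semopenD[OF gQ1 op] by blast
    have small: "\<And>g. g \<in> FV \<Longrightarrow> q g < 1 \<Longrightarrow> 0 < Re (ch g)"
      using q(2) by (simp add: vzero_def)
    have sn: "seminormFV q" using goodQ_sn[OF gQ1 q(1)] .
    obtain \<phi> where \<phi>: "linear_on_FV \<phi>" "\<forall>f\<in>FV. \<bar>\<phi> f\<bar> \<le> pi / 2 * q f" "\<forall>f\<in>FV. ch f = cis (\<phi> f)"
      using lift_exists[of ch q, OF hom circ sn small] by blast
    have "(\<lambda>f. pi / 2 * q f) \<in> QQ {l. 0 \<le> l}" by (rule goodQ_scale[OF gQ1 q(1)]) simp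
    then obtain w l where wl: "(\<lambda>f. pi / 2 * q f) = qq w l" "adm w" "0 \<le> l" unfolding QQ_def by auto
    have "\<forall>f\<in>FV. \<bar>\<phi> f\<bar> \<le> qq w l f" using \<phi>(2) wl(1) by metis
    then obtain w' where w': "adm w'" "\<forall>f\<in>FV. \<bar>\<phi> f\<bar> \<le> qq w' 0 f"
      using dual_reduce[OF \<phi>(1) wl(2) wl(3)] by blast
    have "qq w' 0 \<in> QQ {0}" unfolding QQ_def using w'(1) by blast
    then have "continuous_map T0 euclideanreal \<phi>" using dominated_cont[OF gQ0 \<phi>(1) _ w'(2)] by blast
    then have "continuous_map T0 euclidean (\<lambda>f. cis (1 * \<phi> f))" by (rule cont_cis_comp)
    then have "continuous_map T0 euclidean ch"
      by (rule continuous_map_eq) (use \<phi>(3) topspace_semtop[OF gQ0] in auto)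
    then show "ch \<in> characters T0" using chn unfolding characters_def by auto
  qed
qed

lemma lqc_T0: "locally_quasi_convex T0" using semtop_lqc[OF gQ0 norming_QQ[OF goodL0]] .
lemma lqc_nu: "locally_quasi_convex Tnu" using semtop_lqc[OF gQ1 norming_QQ[OF goodL1]] .

theorem theorem1p1:
  shows "(\<exists>T. free_lc_topology T) \<and>
         (\<forall>T. free_lc_topology T \<longrightarrow> \<not> mackey_space T \<and> \<not> mackey_group T)"
proof (intro conjI allI impI)
  show "\<exists>T. free_lc_topology T" using free_T0 by blast
  fix T assume "free_lc_topology T"
  then have T: "T = T0" by (rule free_unique)
  show "\<not> mackey_space T"
  proof
    assume "mackey_space T"
    then have "coarser Tnu T0" using T semtop_lc[OF gQ1] dual_eq unfolding mackey_space_def by blast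
    then show False using not_coarser by blast
  qed
  show "\<not> mackey_group T"
  proof
    assume "mackey_group T"
    then have "coarser Tnu T0" using T lqc_nu char_eq unfolding mackey_group_def by blast
    then show False using not_coarser by blast
  qed
qed


end
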